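(* Let $H$ be a tree of order at least two. Then $S_2(H)$ (for any function $\alpha$) is a DPDP-tree. Moreover, $S_2(H)$ is not a minimal DPDP-tree if and only if there is a tree $Q$ in $H-(L_H\cup S_H)$ such that $Q\circ K_1$ is a subtree of $H-L_H$ and $d_H(x)=d_Q(x)+1$ for each vertex $x$ of $Q$.
   Context: Graphs are finite. A leaf is a vertex of degree one; a support vertex is a vertex adjacent to a leaf; $L_H$ and $S_H$ denote the sets of leaves and of support vertices of $H$. The corona $Q\circ K_1$ is obtained from $Q$ by attaching one pendant edge to each vertex of $Q$; "$Q\circ K_1$ is a subtree of $H-L_H$" means that $H-L_H$ contains $Q$ together with, for each vertex of $Q$, a distinct additional neighbor outside $Q$, forming a copy of $Q\circ K_1$. A set $D\subseteq V(G)$ is dominating if every vertex outside $D$ has a neighbor in $D$; $P$ is paired-dominating if it is dominating and the subgraph induced by $P$ has a perfect matching. A DPDP-graph (DPDP-tree if a tree) is a graph $G$ admitting disjoint sets $D,P$ with $V(G)=D\cup P$, $D$ dominating and $P$ paired-dominating; a minimal DPDP-graph is a DPDP-graph no proper spanning subgraph of which is a DPDP-graph. 2-subdivision graph: for a graph $H$ with no isolated vertex and $\alpha:L_H\to\mathbb{N}=\{1,2,\dots\}$, $S_2(H)$ has vertex set $(V_H\setminus L_H)\cup\{(v,i): v\in L_H, 1\le i\le \alpha(v)\}$ together with two new vertices $u_e,v_e$ for each edge $e=uv$ of $H$. Its edges are: $u_ev_e$ for each edge $e=uv$; for $v\in V_H\setminus L_H$, $vv_e$ for each edge $e$ at $v$;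 for $v\in L_H$ with incident edge $e$, the edges $v_e(v,i)$, $1\le i\le\alpha(v)$. *)

theory Defs
  imports Main
begin

definition graph :: "'a set \<Rightarrow> 'a set set \<Rightarrow> bool" where
  "graph V E \<longleftrightarrow> finite V \<and> (\<forall>e\<in>E. \<exists>u v. e = {u, v} \<and> u \<in> V \<and> v \<in> V \<and> u \<noteq> v)"

definition degree :: "'a set set \<Rightarrow> 'a \<Rightarrow> nat" where
  "degree E v = card {e \<in> E. v \<in> e}"

definition leaves :: "'a set \<Rightarrow> 'a set set \<Rightarrow> 'a set" where
  "leaves V E = {v \<in> V. degree E v = 1}"

definition supports :: "'a set \<Rightarrow> 'a set set \<Rightarrow> 'a set" where
  "supports V E = {v \<in> V. \<exists>u \<in> leaves V E. {u, v} \<in> E}"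

definition connected_graph :: "'a set \<Rightarrow> 'a set set \<Rightarrow> bool" where
  "connected_graph V E \<longleftrightarrow> (\<forall>u\<in>V. \<forall>v\<in>V. (\<lambda>x y. {x, y} \<in> E)\<^sup>*\<^sup>* u v)"

definition has_cycle :: "'a set \<Rightarrow> 'a set set \<Rightarrow> bool" where
  "has_cycle V E \<longleftrightarrow> (\<exists>xs. length xs \<ge> 3 \<and> distinct xs \<and> set xs \<subseteq> V \<and>
     (\<forall>i < length xs. {xs ! i, xs ! ((i + 1) mod length xs)} \<in> E))"

definition is_tree :: "'a set \<Rightarrow> 'a set set \<Rightarrow> bool" where
  "is_tree V E \<longleftrightarrow> graph V E \<and> V \<noteq> {} \<and> connected_graph V E \<and> \<not> has_cycle V E"

definition dominating :: "'a set \<Rightarrow> 'a set set \<Rightarrow> 'a set \<Rightarrow> bool" where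
  "dominating V E D \<longleftrightarrow> D \<subseteq> V \<and> (\<forall>v \<in> V - D. \<exists>u \<in> D. {u, v} \<in> E)"

definition induced_perfect_matching :: "'a set set \<Rightarrow> 'a set \<Rightarrow> bool" where
  "induced_perfect_matching E P \<longleftrightarrow>
     (\<exists>M \<subseteq> E. (\<forall>e \<in> M. e \<subseteq> P) \<and> (\<forall>v \<in> P. \<exists>!e. e \<in> M \<and> v \<in> e))"

definition paired_dominating :: "'a set \<Rightarrow> 'a set set \<Rightarrow> 'a set \<Rightarrow> bool" where
  "paired_dominating V E P \<longleftrightarrow> dominating V E P \<and> induced_perfect_matching E P"

definition dpdp :: "'a set \<Rightarrow> 'a set set \<Rightarrow> bool" where
  "dpdp V E \<longleftrightarrow> (\<exists>D P. D \<inter> P = {} \<and> D \<union> P = V \<and> dominating V E D \<and> paired_dominating V E P)"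

definition minimal_dpdp :: "'a set \<Rightarrow> 'a set set \<Rightarrow> bool" where
  "minimal_dpdp V E \<longleftrightarrow> dpdp V E \<and> (\<forall>E'. E' \<subset> E \<longrightarrow> \<not> dpdp V E')"

definition dpdp_tree :: "'a set \<Rightarrow> 'a set set \<Rightarrow> bool" where
  "dpdp_tree V E \<longleftrightarrow> is_tree V E \<and> dpdp V E"

definition minimal_dpdp_tree :: "'a set \<Rightarrow> 'a set set \<Rightarrow> bool" where
  "minimal_dpdp_tree V E \<longleftrightarrow> is_tree V E \<and> minimal_dpdp V E"

text \<open>Vertices of the 2-subdivision graph: Orig v (v a non-leaf of H),
  LCopy v i = (v,i) for leaves v, and Sub v e = v_e for an edge e at v.\<close>
datatype 'a s2v = Orig 'a | LCopy 'a nat | Sub 'a "'a set"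

definition S2V :: "'a set \<Rightarrow> 'a set set \<Rightarrow> ('a \<Rightarrow> nat) \<Rightarrow> 'a s2v set" where
  "S2V V E \<alpha> =
     Orig ` (V - leaves V E)
     \<union> {LCopy v i | v i. v \<in> leaves V E \<and> 1 \<le> i \<and> i \<le> \<alpha> v}
     \<union> {Sub v e | v e. e \<in> E \<and> v \<in> e}"

definition S2E :: "'a set \<Rightarrow> 'a set set \<Rightarrow> ('a \<Rightarrow> nat) \<Rightarrow> 'a s2v set set" where
  "S2E V E \<alpha> =
     {{Sub u e, Sub v e} | u v e. e \<in> E \<and> e = {u, v} \<and> u \<noteq> v}
     \<union> {{Orig v, Sub v e} | v e. v \<in> V - leaves V E \<and> e \<in> E \<and> v \<in> e}
     \<union> {{Sub v e, LCopy v i} | v e i. v \<in> leaves V E \<and> e \<in> E \<and> v \<in> e \<and> 1 \<le> i \<and> i \<le> \<alpha> v}"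

end

theory Submission
  imports Defs
begin
abbreviation rch :: "'a set set \<Rightarrow> 'a \<Rightarrow> 'a \<Rightarrow> bool" where
  "rch F \<equiv> (\<lambda>x y. {x, y} \<in> F)\<^sup>*\<^sup>*"

lemma rch_sym: "rch F x y \<Longrightarrow> rch F y x"
proof (induction rule: rtranclp_induct)
  case base then show ?case by simp
next
  case (step y z)
  then have "{z, y} \<in> F" by (simp add: insert_commute)
  then show ?case using step(3) by (rule converse_rtranclp_into_rtranclp)
qed

lemma rtc_closed:
  assumes "R\<^sup>*\<^sup>* x y" "x \<in> S" "\<And>p q. p \<in> S \<Longrightarrow> R p q \<Longrightarrow> q \<in> S"
  shows "y \<in> S"
  using assms(1,2) by (induction rule: rtranclp_induct) (auto intro: assms(3))

lemma rch_mono: "rch F x y \<Longrightarrow> F \<subseteq> F' \<Longrightarrow> rch F' x y"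
  by (induction rule: rtranclp_induct) (auto intro: rtranclp.rtrancl_into_rtrancl)

lemma rch_path:
  assumes "rch F a b"
  shows "\<exists>xs. xs \<noteq> [] \<and> hd xs = a \<and> last xs = b \<and> distinct xs \<and> successively (\<lambda>x y. {x, y} \<in> F) xs"
  using assms
proof (induction rule: rtranclp_induct)
  case base
  then show ?case by (intro exI[of _ "[a]"]) auto
next
  case (step b c)
  then obtain xs where xs: "xs \<noteq> []" "hd xs = a" "last xs = b" "distinct xs"
    "successively (\<lambda>x y. {x, y} \<in> F) xs" by blast
  show ?case
  proof (cases "c \<in> set xs")
    case True
    then obtain ys zs where yz: "xs = ys @ c # zs" by (meson split_list)
    show ?thesis
    proof (intro exI[of _ "ys @ [c]"] conjI)
      show "hd (ys @ [c]) = a" using xs(2) yz by (cases ys) auto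
      show "distinct (ys @ [c])" using xs(4) yz by auto
      show "successively (\<lambda>x y. {x, y} \<in> F) (ys @ [c])"
        using xs(5) yz by (auto simp: successively_append_iff)
    qed auto
  next
    case False
    show ?thesis
    proof (intro exI[of _ "xs @ [c]"] conjI)
      show "hd (xs @ [c]) = a" using xs by auto
      show "distinct (xs @ [c])" using xs False by auto
      show "successively (\<lambda>x y. {x, y} \<in> F) (xs @ [c])"
        using xs step(2) by (auto simp: successively_append_iff)
    qed auto
  qed
qed

lemma graph_edge: "graph V E \<Longrightarrow> e \<in> E \<Longrightarrow> \<exists>u v. e = {u, v} \<and> u \<in> V \<and> v \<in> V \<and> u \<noteq> v"
  unfolding graph_def by blast

lemma graph_sub: "graph V E \<Longrightarrow> e \<in> E \<Longrightarrow> e \<subseteq> V"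
  unfolding graph_def by fastforce

lemma cyc_of_rch:
  assumes g: "graph V E" and e: "{u, w} \<in> E" and uw: "u \<noteq> w"
    and r: "rch (E - {{u, w}}) u w"
  shows "has_cycle V E"
proof -
  obtain xs where xs: "xs \<noteq> []" "hd xs = u" "last xs = w" "distinct xs"
    "successively (\<lambda>x y. {x, y} \<in> E - {{u, w}}) xs" using rch_path[OF r] by blast
  let ?n = "length xs"
  have n2: "?n \<ge> 2"
  proof (rule ccontr)
    assume "\<not> ?n \<ge> 2"
    moreover have "?n \<noteq> 0" using xs(1) by simp
    ultimately have "?n = 1" by linarith
    then obtain x where "xs = [x]" by (auto simp: length_Suc_conv)
    then show False using xs uw by auto
  qed
  have n3: "?n \<ge> 3"
  proof (rule ccontr)
    assume "\<not> ?n \<ge> 3"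
    then have "?n = 2" using n2 by auto
    then obtain x y where "xs = [x, y]"
      by (cases xs; cases "tl xs") auto
    then have "u = x" "w = y" using xs(2,3) by auto
    then have "{u, w} \<in> E - {{u, w}}" using xs(5) \<open>xs = [x, y]\<close> by simp
    then show False by simp
  qed
  have edges: "\<forall>i < ?n. {xs ! i, xs ! ((i + 1) mod ?n)} \<in> E"
  proof (intro allI impI)
    fix i assume i: "i < ?n"
    show "{xs ! i, xs ! ((i + 1) mod ?n)} \<in> E"
    proof (cases "Suc i < ?n")
      case True
      then have "{xs ! i, xs ! Suc i} \<in> E - {{u, w}}" using successively_nth[OF xs(5) True] by simp
      then show ?thesis using True by simp
    next
      case False
      then have "i = ?n - 1" using i by auto
      have "i + 1 = ?n" using \<open>i = ?n - 1\<close> n2 by linarith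
      then have "(i + 1) mod ?n = 0" by simp
      then have "xs ! i = w" "xs ! ((i + 1) mod ?n) = u"
        using xs(1,2,3) \<open>i = ?n - 1\<close> by (simp_all add: last_conv_nth hd_conv_nth)
      then show ?thesis using e by (simp add: insert_commute)
    qed
  qed
  have "set xs \<subseteq> V"
  proof
    fix x assume "x \<in> set xs"
    then obtain i where i: "i < ?n" "x = xs ! i" by (auto simp: in_set_conv_nth)
    then have "{x, xs ! ((i + 1) mod ?n)} \<in> E" using edges by auto
    then have "{x, xs ! ((i + 1) mod ?n)} \<subseteq> V" by (rule graph_sub[OF g])
    then show "x \<in> V" by simp
  qed
  then show ?thesis unfolding has_cycle_def using n3 xs(4) edges by (intro exI[of _ xs]) simp
qed

lemma rch_of_cyc:
  assumes "has_cycle V E"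
  shows "\<exists>a b. {a, b} \<in> E \<and> a \<noteq> b \<and> rch (E - {{a, b}}) b a"
proof -
  obtain xs where xs: "length xs \<ge> 3" "distinct xs" "set xs \<subseteq> V"
    "\<forall>i < length xs. {xs ! i, xs ! ((i + 1) mod length xs)} \<in> E"
    using assms unfolding has_cycle_def by blast
  let ?n = "length xs"
  have "0 < length xs" using xs(1) by linarith
  have e01: "{xs ! 0, xs ! 1} \<in> E"
  proof -
    have "{xs ! 0, xs ! ((0 + 1) mod ?n)} \<in> E" using xs(4) \<open>0 < length xs\<close> by blast
    moreover have "(0 + 1) mod ?n = 1" using xs(1) by simp
    ultimately show ?thesis by simp
  qed
  have ne: "xs ! 0 \<noteq> xs ! 1"
  proof
    assume "xs ! 0 = xs ! 1"
    moreover have "0 < ?n" "1 < ?n" using xs(1) by linarith+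
    ultimately have "(0::nat) = 1" using nth_eq_iff_index_eq[OF xs(2)] by blast
    then show False by simp
  qed
  have nstep: "\<And>k. 1 \<le> k \<Longrightarrow> k < ?n \<Longrightarrow> {xs ! k, xs ! ((k + 1) mod ?n)} \<noteq> {xs ! 0, xs ! 1}"
  proof
    fix k assume k: "1 \<le> k" "k < ?n" and eq: "{xs ! k, xs ! ((k + 1) mod ?n)} = {xs ! 0, xs ! 1}"
    have m: "(k + 1) mod ?n < ?n" using \<open>0 < ?n\<close> by (rule mod_less_divisor)
    have idx: "\<And>a. a < ?n \<Longrightarrow> xs ! a \<in> {xs ! 0, xs ! 1} \<Longrightarrow> a = 0 \<or> a = 1"
    proof -
      fix a assume a: "a < ?n" "xs ! a \<in> {xs ! 0, xs ! 1}"
      then have "xs ! a = xs ! 0 \<or> xs ! a = xs ! 1" by blast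
      then show "a = 0 \<or> a = 1" using nth_eq_iff_index_eq[OF xs(2)] a(1) xs(1) by force
    qed
    have "xs ! ((k + 1) mod ?n) \<in> {xs ! 0, xs ! 1}" using eq by blast
    then have A: "(k + 1) mod ?n = 0 \<or> (k + 1) mod ?n = 1" using idx m by blast
    have "xs ! k \<in> {xs ! 0, xs ! 1}" using eq by blast
    then have "k = 0 \<or> k = 1" using idx k by blast
    then have "k = 1" using k by simp
    then show False using xs(1) A by simp
  qed
  have reach: "\<And>k. 1 \<le> k \<Longrightarrow> k < ?n \<Longrightarrow> rch (E - {{xs ! 0, xs ! 1}}) (xs ! 1) (xs ! k)"
  proof -
    fix k assume "1 \<le> k" "k < ?n"
    then show "rch (E - {{xs ! 0, xs ! 1}}) (xs ! 1) (xs ! k)"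
    proof (induction k rule: dec_induct)
      case base then show ?case by simp
    next
      case (step k)
      have k1: "1 \<le> k" "k < ?n" "Suc k < ?n" using step.hyps step.prems by auto
      have "{xs ! k, xs ! ((k + 1) mod ?n)} \<in> E" using xs(4) k1 by blast
      moreover have "{xs ! k, xs ! ((k + 1) mod ?n)} \<noteq> {xs ! 0, xs ! 1}" using nstep[OF k1(1,2)] by blast
      moreover have "(k + 1) mod ?n = Suc k" using k1 by simp
      ultimately have "{xs ! k, xs ! Suc k} \<in> E - {{xs ! 0, xs ! 1}}" by simp
      then show ?case using step.IH k1 by (auto intro: rtranclp.rtrancl_into_rtrancl)
    qed
  qed
  have "rch (E - {{xs ! 0, xs ! 1}}) (xs ! 1) (xs ! (?n - 1))" using reach xs(1) by simp
  moreover have "{xs ! (?n - 1), xs ! 0} \<in> E - {{xs ! 0, xs ! 1}}"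
  proof -
    have "{xs ! (?n - 1), xs ! ((?n - 1 + 1) mod ?n)} \<in> E" using xs(4) xs(1) by simp
    moreover have "{xs ! (?n - 1), xs ! ((?n - 1 + 1) mod ?n)} \<noteq> {xs ! 0, xs ! 1}"
      using nstep[of "?n - 1"] xs(1) by simp
    moreover have "?n - 1 + 1 = ?n" using xs(1) by linarith
    then have "(?n - 1 + 1) mod ?n = 0" by simp
    ultimately show ?thesis by simp
  qed
  ultimately have "rch (E - {{xs ! 0, xs ! 1}}) (xs ! 1) (xs ! 0)"
    by (auto intro: rtranclp.rtrancl_into_rtrancl)
  then show ?thesis using e01 ne by blast
qed

locale s2 =
  fixes V :: "'a set" and E :: "'a set set" and \<alpha> :: "'a \<Rightarrow> nat"
  assumes tree: "is_tree V E" and card2: "card V \<ge> 2"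
    and alpha: "\<forall>v \<in> leaves V E. \<alpha> v \<ge> 1"
begin

abbreviation "L \<equiv> leaves V E"
abbreviation "V2 \<equiv> S2V V E \<alpha>"
abbreviation "E2 \<equiv> S2E V E \<alpha>"

lemma gH: "graph V E" using tree unfolding is_tree_def by blast
lemma finV: "finite V" using gH unfolding graph_def by blast
lemma EsubPow: "E \<subseteq> Pow V" using graph_sub[OF gH] by blast
lemma finE: "finite E" using EsubPow finV by (meson finite_Pow_iff finite_subset)
lemma noc: "\<not> has_cycle V E" using tree unfolding is_tree_def by blast
lemma conH: "connected_graph V E" using tree unfolding is_tree_def by blast

lemma edgeE: "e \<in> E \<Longrightarrow> \<exists>u v. e = {u, v} \<and> u \<in> V \<and> v \<in> V \<and> u \<noteq> v"
  using graph_edge[OF gH] by blast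

lemma edge_ne: "{u, v} \<in> E \<Longrightarrow> u \<noteq> v"
  using edgeE by fastforce

lemma edge_V: "{u, v} \<in> E \<Longrightarrow> u \<in> V \<and> v \<in> V"
  using graph_sub[OF gH] by blast

lemma edge_other: "e \<in> E \<Longrightarrow> u \<in> e \<Longrightarrow> \<exists>v. e = {u, v} \<and> u \<noteq> v \<and> v \<in> V"
proof -
  assume "e \<in> E" "u \<in> e"
  then obtain a b where "e = {a, b}" "a \<in> V" "b \<in> V" "a \<noteq> b" using edgeE by blast
  then show ?thesis using \<open>u \<in> e\<close> by (auto simp: insert_commute)
qed

lemma sep: "{u, v} \<in> E \<Longrightarrow> \<not> rch (E - {{u, v}}) u v"
  using cyc_of_rch[OF gH] edge_ne noc by blast

lemma deg_pos: "u \<in> V \<Longrightarrow> \<exists>e\<in>E. u \<in> e"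
proof -
  assume u: "u \<in> V"
  have "\<exists>v\<in>V. v \<noteq> u"
  proof (rule ccontr)
    assume "\<not> ?thesis"
    then have "V \<subseteq> {u}" by blast
    then have "card V \<le> card {u}" by (intro card_mono) auto
    then have "card V \<le> 1" by simp
    then show False using card2 by simp
  qed
  then obtain v where v: "v \<in> V" "v \<noteq> u" by blast
  have "rch E u v" using conH u v unfolding connected_graph_def by blast
  then show ?thesis
  proof (cases rule: converse_rtranclpE)
    case base then show ?thesis using v by simp
  next
    case (step y) then show ?thesis by blast
  qed
qed

lemma leaf_deg: "v \<in> L \<Longrightarrow> card {e \<in> E. v \<in> e} = 1"
  unfolding leaves_def degree_def by simp

lemma leaf_edge: "v \<in> L \<Longrightarrow> e \<in> E \<Longrightarrow> v \<in> e \<Longrightarrow> e' \<in> E \<Longrightarrow> v \<in> e' \<Longrightarrow> e = e'"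
proof -
  assume "v \<in> L" "e \<in> E" "v \<in> e" "e' \<in> E" "v \<in> e'"
  then have "card {e \<in> E. v \<in> e} = 1" "e \<in> {e \<in> E. v \<in> e}" "e' \<in> {e \<in> E. v \<in> e}"
    using leaf_deg by auto
  then show "e = e'" by (metis card_1_singletonE singletonD)
qed

lemma leaf_ex: "v \<in> L \<Longrightarrow> \<exists>e\<in>E. v \<in> e"
  using leaf_deg by (metis (mono_tags, lifting) card_1_singletonE mem_Collect_eq singletonI)

lemma leafV: "v \<in> L \<Longrightarrow> v \<in> V" unfolding leaves_def by simp

lemma nonleaf_two: "u \<in> V - L \<Longrightarrow> \<exists>e1 e2. e1 \<in> E \<and> e2 \<in> E \<and> u \<in> e1 \<and> u \<in> e2 \<and> e1 \<noteq> e2"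
proof -
  assume u: "u \<in> V - L"
  let ?A = "{e \<in> E. u \<in> e}"
  have fin: "finite ?A" using finE by simp
  have "?A \<noteq> {}" using deg_pos u by blast
  then have "card ?A \<noteq> 0" using fin by simp
  moreover have "card ?A \<noteq> 1" using u unfolding leaves_def degree_def by simp
  ultimately have "card ?A \<ge> 2" by linarith
  then show ?thesis
    by (metis (mono_tags, lifting) One_nat_def card_le_Suc0_iff_eq fin mem_Collect_eq not_less_eq_eq numeral_2_eq_2)
qed

lemma V2_Orig[simp]: "Orig u \<in> V2 \<longleftrightarrow> u \<in> V - L"
  unfolding S2V_def by auto
lemma V2_LCopy[simp]: "LCopy v i \<in> V2 \<longleftrightarrow> v \<in> L \<and> 1 \<le> i \<and> i \<le> \<alpha> v"
  unfolding S2V_def by auto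
lemma V2_Sub[simp]: "Sub u e \<in> V2 \<longleftrightarrow> e \<in> E \<and> u \<in> e"
  unfolding S2V_def by auto

lemma E2_mid: "e \<in> E \<Longrightarrow> e = {u, v} \<Longrightarrow> u \<noteq> v \<Longrightarrow> {Sub u e, Sub v e} \<in> E2"
  unfolding S2E_def
  apply (rule UnI1, rule UnI1, rule CollectI)
  apply (rule exI[of _ u], rule exI[of _ v], rule exI[of _ e])
  by simp
lemma E2_orig: "u \<in> V - L \<Longrightarrow> e \<in> E \<Longrightarrow> u \<in> e \<Longrightarrow> {Orig u, Sub u e} \<in> E2"
  unfolding S2E_def
  apply (rule UnI1, rule UnI2, rule CollectI)
  apply (rule exI[of _ u], rule exI[of _ e])
  by simp
lemma E2_lc: "v \<in> L \<Longrightarrow> e \<in> E \<Longrightarrow> v \<in> e \<Longrightarrow> 1 \<le> i \<Longrightarrow> i \<le> \<alpha> v \<Longrightarrow> {Sub v e, LCopy v i} \<in> E2"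
  unfolding S2E_def
  apply (rule UnI2, rule CollectI)
  apply (rule exI[of _ v], rule exI[of _ e], rule exI[of _ i])
  by simp

lemma E2_cases:
  assumes "g \<in> E2"
  obtains (mid) u v e where "e \<in> E" "e = {u, v}" "u \<noteq> v" "g = {Sub u e, Sub v e}"
  | (orig) u e where "u \<in> V - L" "e \<in> E" "u \<in> e" "g = {Orig u, Sub u e}"
  | (lc) v e i where "v \<in> L" "e \<in> E" "v \<in> e" "1 \<le> i" "i \<le> \<alpha> v" "g = {Sub v e, LCopy v i}"
  using assms unfolding S2E_def by auto

lemma nb_Orig: "{Orig u, x} \<in> E2 \<Longrightarrow> u \<in> V - L \<and> (\<exists>e. x = Sub u e \<and> e \<in> E \<and> u \<in> e)"
  by (erule E2_cases) (auto simp: doubleton_eq_iff)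

lemma nb_LCopy: "{LCopy v i, x} \<in> E2 \<Longrightarrow> v \<in> L \<and> 1 \<le> i \<and> i \<le> \<alpha> v \<and> (\<exists>e. x = Sub v e \<and> e \<in> E \<and> v \<in> e)"
  by (erule E2_cases) (auto simp: doubleton_eq_iff)

lemma nb_Sub: "{Sub u e, x} \<in> E2 \<Longrightarrow> e \<in> E \<and> u \<in> e \<and>
   ((\<exists>v. x = Sub v e \<and> e = {u, v} \<and> u \<noteq> v) \<or> (x = Orig u \<and> u \<in> V - L) \<or>
    (\<exists>i. x = LCopy u i \<and> u \<in> L \<and> 1 \<le> i \<and> i \<le> \<alpha> u))"
  by (erule E2_cases) (auto simp: doubleton_eq_iff insert_commute)

lemma E2_sub: "g \<in> E2 \<Longrightarrow> \<exists>a b. g = {a, b} \<and> a \<in> V2 \<and> b \<in> V2 \<and> a \<noteq> b"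
proof (erule E2_cases)
  fix u v e assume "e \<in> E" "e = {u, v}" "u \<noteq> v" "g = {Sub u e, Sub v e}"
  then have "Sub u e \<in> V2" "Sub v e \<in> V2" "Sub u e \<noteq> Sub v e" by simp_all
  then show ?thesis using \<open>g = _\<close> by blast
next
  fix u e assume "u \<in> V - L" "e \<in> E" "u \<in> e" "g = {Orig u, Sub u e}"
  then have "Orig u \<in> V2" "Sub u e \<in> V2" "Orig u \<noteq> Sub u e" by simp_all
  then show ?thesis using \<open>g = _\<close> by blast
next
  fix v e i assume "v \<in> L" "e \<in> E" "v \<in> e" "1 \<le> i" "i \<le> \<alpha> v" "g = {Sub v e, LCopy v i}"
  then have "Sub v e \<in> V2" "LCopy v i \<in> V2" "Sub v e \<noteq> LCopy v i" by simp_all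
  then show ?thesis using \<open>g = _\<close> by blast
qed

lemma finV2: "finite V2"
proof -
  have s1: "{LCopy v i | v i. v \<in> L \<and> 1 \<le> i \<and> i \<le> \<alpha> v} \<subseteq> (\<Union>v\<in>L. LCopy v ` {1..\<alpha> v})"
    by auto
  have "finite L" using finV unfolding leaves_def by simp
  then have f1: "finite {LCopy v i | v i. v \<in> L \<and> 1 \<le> i \<and> i \<le> \<alpha> v}"
    using finite_subset[OF s1] by blast
  have s2: "{Sub v e | v e. e \<in> E \<and> v \<in> e} \<subseteq> (\<lambda>(v, e). Sub v e) ` (V \<times> E)"
  proof
    fix x assume "x \<in> {Sub v e | v e. e \<in> E \<and> v \<in> e}"
    then obtain v e where "x = Sub v e" "e \<in> E" "v \<in> e" by blast
    moreover then have "v \<in> V" using EsubPow by blast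
    ultimately show "x \<in> (\<lambda>(v, e). Sub v e) ` (V \<times> E)" by (intro image_eqI[of _ _ "(v, e)"]) auto
  qed
  have "finite ((\<lambda>(v, e). Sub v e) ` (V \<times> E))" using finV finE by simp
  then have f2: "finite {Sub v e | v e. e \<in> E \<and> v \<in> e}" using finite_subset[OF s2] by blast
  show ?thesis unfolding S2V_def using f1 f2 finV by simp
qed

lemma gG: "graph V2 E2"
  unfolding graph_def using finV2 E2_sub by blast

end

context s2 begin

lemma rch_edge: "{x, y} \<in> F \<Longrightarrow> rch F x y"
  by (rule r_into_rtranclp)

lemma same_vertex:
  assumes "e \<in> E" "e' \<in> E" "u \<in> e" "u \<in> e'"
  shows "rch E2 (Sub u e) (Sub u e')"
proof (cases "u \<in> L")
  case True
  then have "e = e'" using leaf_edge assms by blast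
  then show ?thesis by simp
next
  case False
  have "u \<in> V" using assms EsubPow by blast
  then have uV: "u \<in> V - L" using False by blast
  have "{Orig u, Sub u e} \<in> E2" using E2_orig[OF uV assms(1,3)] .
  then have "rch E2 (Sub u e) (Orig u)" using rch_edge[of "Sub u e" "Orig u"] by (simp add: insert_commute)
  moreover have "rch E2 (Orig u) (Sub u e')" using rch_edge E2_orig[OF uV assms(2,4)] by blast
  ultimately show ?thesis by (rule rtranclp_trans)
qed

lemma conG: "connected_graph V2 E2"
proof -
  have "V \<noteq> {}" using card2 by auto
  then obtain u0 where u0: "u0 \<in> V" by blast
  then obtain e0 where e0: "e0 \<in> E" "u0 \<in> e0" using deg_pos by blast
  have A: "\<forall>e\<in>E. u \<in> e \<longrightarrow> rch E2 (Sub u0 e0) (Sub u e)" if "rch E u0 u" for u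
    using that
  proof (induction rule: rtranclp_induct)
    case base
    then show ?case using same_vertex e0 by blast
  next
    case (step y z)
    have yz: "y \<noteq> z" using step(2) edge_ne by blast
    have "{y, z} \<in> E" using step(2) by simp
    have "rch E2 (Sub u0 e0) (Sub y {y, z})" using step(3) \<open>{y, z} \<in> E\<close> by blast
    moreover have "{Sub y {y, z}, Sub z {y, z}} \<in> E2" using E2_mid[OF \<open>{y, z} \<in> E\<close> refl yz] .
    ultimately have r: "rch E2 (Sub u0 e0) (Sub z {y, z})" by (rule rtranclp.rtrancl_into_rtrancl)
    show ?case
    proof (intro ballI impI)
      fix e assume "e \<in> E" "z \<in> e"
      have "rch E2 (Sub z {y, z}) (Sub z e)" using same_vertex[OF \<open>{y, z} \<in> E\<close> \<open>e \<in> E\<close> _ \<open>z \<in> e\<close>] by simp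
      then show "rch E2 (Sub u0 e0) (Sub z e)" using r by (rule rtranclp_trans[rotated])
    qed
  qed
  have B: "rch E2 (Sub u0 e0) x" if x: "x \<in> V2" for x
  proof (cases x)
    case (Orig u)
    then have uV: "u \<in> V - L" using x by simp
    then obtain e where e: "e \<in> E" "u \<in> e" using deg_pos by blast
    have "rch E u0 u" using conH u0 uV unfolding connected_graph_def by blast
    then have "rch E2 (Sub u0 e0) (Sub u e)" using A e by blast
    moreover have "{Sub u e, Orig u} \<in> E2" using E2_orig[OF uV e] by (simp add: insert_commute)
    ultimately show ?thesis unfolding Orig by (rule rtranclp.rtrancl_into_rtrancl)
  next
    case (LCopy v i)
    then have v: "v \<in> L" "1 \<le> i" "i \<le> \<alpha> v" using x by simp_all
    then obtain e where e: "e \<in> E" "v \<in> e" using leaf_ex by blast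
    have "rch E u0 v" using conH u0 leafV[OF v(1)] unfolding connected_graph_def by blast
    then have "rch E2 (Sub u0 e0) (Sub v e)" using A e by blast
    moreover have "{Sub v e, LCopy v i} \<in> E2" using E2_lc[OF v(1) e v(2,3)] .
    ultimately show ?thesis unfolding LCopy by (rule rtranclp.rtrancl_into_rtrancl)
  next
    case (Sub u e)
    then have e: "e \<in> E" "u \<in> e" using x by simp_all
    then have "u \<in> V" using EsubPow by blast
    then have "rch E u0 u" using conH u0 unfolding connected_graph_def by blast
    then show ?thesis using A e Sub by blast
  qed
  show ?thesis unfolding connected_graph_def
  proof (intro ballI)
    fix x y assume "x \<in> V2" "y \<in> V2"
    then have "rch E2 x (Sub u0 e0)" "rch E2 (Sub u0 e0) y" using B[of x] B[of y] rch_sym[of E2 "Sub u0 e0" x] by simp_all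
    then show "rch E2 x y" by (rule rtranclp_trans)
  qed
qed

end

context s2 begin

lemma sep_mid:
  assumes e: "e \<in> E" "e = {u, v}" "u \<noteq> v"
  shows "\<not> rch (E2 - {{Sub u e, Sub v e}}) (Sub u e) (Sub v e)"
proof
  assume r: "rch (E2 - {{Sub u e, Sub v e}}) (Sub u e) (Sub v e)"
  define A where "A = {y. rch (E - {e}) u y}"
  define S where "S = {x. \<exists>y\<in>A. x = Orig y \<or> (\<exists>i. x = LCopy y i) \<or> (\<exists>e'. x = Sub y e')}"
  have uA: "u \<in> A" unfolding A_def by simp
  have vA: "v \<notin> A" unfolding A_def using sep[of u v] e by simp
  have "Sub v e \<in> S"
  proof (rule rtc_closed[OF r])
    show "Sub u e \<in> S" unfolding S_def using uA by blast
  next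
    fix p q assume p: "p \<in> S" and pq: "{p, q} \<in> E2 - {{Sub u e, Sub v e}}"
    from p obtain y where y: "y \<in> A" "p = Orig y \<or> (\<exists>i. p = LCopy y i) \<or> (\<exists>e'. p = Sub y e')"
      unfolding S_def by blast
    from y(2) show "q \<in> S"
    proof (elim disjE exE)
      assume "p = Orig y"
      then obtain e' where "q = Sub y e'" using nb_Orig pq by blast
      then show ?thesis unfolding S_def using y(1) by blast
    next
      fix i assume "p = LCopy y i"
      then obtain e' where "q = Sub y e'" using nb_LCopy pq by blast
      then show ?thesis unfolding S_def using y(1) by blast
    next
      fix e' assume pe: "p = Sub y e'"
      then have nb: "e' \<in> E \<and> y \<in> e' \<and>
        ((\<exists>y'. q = Sub y' e' \<and> e' = {y, y'} \<and> y \<noteq> y') \<or> (q = Orig y \<and> y \<in> V - L) \<or>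
        (\<exists>i. q = LCopy y i \<and> y \<in> L \<and> 1 \<le> i \<and> i \<le> \<alpha> y))" using nb_Sub pq by blast
      show ?thesis
      proof (cases "\<exists>y'. q = Sub y' e' \<and> e' = {y, y'} \<and> y \<noteq> y'")
        case True
        then obtain y' where y': "q = Sub y' e'" "e' = {y, y'}" "y \<noteq> y'" by blast
        show ?thesis
        proof (cases "e' = e")
          case True
          then have "{y, y'} = {u, v}" using y' e by simp
          then have "{p, q} = {Sub u e, Sub v e}" using pe y' True by (auto simp: doubleton_eq_iff)
          then show ?thesis using pq by simp
        next
          case False
          then have "{y, y'} \<in> E - {e}" using nb y' by simp
          then have "y' \<in> A" using y(1) unfolding A_def by (simp add: rtranclp.rtrancl_into_rtrancl)
          then show ?thesis unfolding S_def using y' by blast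
        qed
      next
        case False
        then show ?thesis using nb y(1) unfolding S_def by blast
      qed
    qed
  qed
  then obtain y where "y \<in> A" "Sub v e = Orig y \<or> (\<exists>i. Sub v e = LCopy y i) \<or> (\<exists>e'. Sub v e = Sub y e')"
    unfolding S_def by blast
  then have "v \<in> A" by auto
  then show False using vA by simp
qed

lemma sep_orig:
  assumes u: "u \<in> V - L" and e: "e \<in> E" "u \<in> e"
  shows "\<not> rch (E2 - {{Orig u, Sub u e}}) (Orig u) (Sub u e)"
proof
  assume r: "rch (E2 - {{Orig u, Sub u e}}) (Orig u) (Sub u e)"
  obtain v where v: "e = {u, v}" "u \<noteq> v" using edge_other e by blast
  define A where "A = {y. rch (E - {e}) u y}"
  define S where "S = {x. \<exists>y\<in>A. x = Orig y \<or> (\<exists>i. x = LCopy y i) \<or> (\<exists>e'. x = Sub y e' \<and> e' \<noteq> e)}"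
  have uA: "u \<in> A" unfolding A_def by simp
  have vA: "v \<notin> A" unfolding A_def using sep[of u v] e v by simp
  have "Sub u e \<in> S"
  proof (rule rtc_closed[OF r])
    show "Orig u \<in> S" unfolding S_def using uA by blast
  next
    fix p q assume p: "p \<in> S" and pq: "{p, q} \<in> E2 - {{Orig u, Sub u e}}"
    from p obtain y where y: "y \<in> A" "p = Orig y \<or> (\<exists>i. p = LCopy y i) \<or> (\<exists>e'. p = Sub y e' \<and> e' \<noteq> e)"
      unfolding S_def by blast
    have yv: "y \<noteq> v" using y(1) vA by blast
    from y(2) show "q \<in> S"
    proof (elim disjE exE conjE)
      assume py: "p = Orig y"
      then obtain e' where e': "q = Sub y e'" "e' \<in> E" "y \<in> e'" using nb_Orig pq by blast
      have "e' \<noteq> e"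
      proof
        assume "e' = e"
        then have "y = u" using e'(3) v yv by blast
        then show False using pq py e' \<open>e' = e\<close> by simp
      qed
      then show ?thesis unfolding S_def using y(1) e' by blast
    next
      fix i assume py: "p = LCopy y i"
      then obtain e' where e': "q = Sub y e'" "e' \<in> E" "y \<in> e'" "y \<in> L" using nb_LCopy pq by blast
      have "e' \<noteq> e"
      proof
        assume "e' = e"
        then have "y = u" using e'(3) v yv by blast
        then show False using u e'(4) by simp
      qed
      then show ?thesis unfolding S_def using y(1) e' by blast
    next
      fix e' assume pe: "p = Sub y e'" and ne: "e' \<noteq> e"
      then have nb: "e' \<in> E \<and> y \<in> e' \<and>
        ((\<exists>y'. q = Sub y' e' \<and> e' = {y, y'} \<and> y \<noteq> y') \<or> (q = Orig y \<and> y \<in> V - L) \<or>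
        (\<exists>i. q = LCopy y i \<and> y \<in> L \<and> 1 \<le> i \<and> i \<le> \<alpha> y))" using nb_Sub pq by blast
      show ?thesis
      proof (cases "\<exists>y'. q = Sub y' e' \<and> e' = {y, y'} \<and> y \<noteq> y'")
        case True
        then obtain y' where y': "q = Sub y' e'" "e' = {y, y'}" "y \<noteq> y'" by blast
        then have "{y, y'} \<in> E - {e}" using nb ne by simp
        then have "y' \<in> A" using y(1) unfolding A_def by (simp add: rtranclp.rtrancl_into_rtrancl)
        then show ?thesis unfolding S_def using y' ne by blast
      next
        case False
        then show ?thesis using nb y(1) unfolding S_def by blast
      qed
    qed
  qed
  then show False unfolding S_def by auto
qed

lemma sep_lc:
  assumes v: "v \<in> L" and e: "e \<in> E" "v \<in> e"
  shows "\<not> rch (E2 - {{Sub v e, LCopy v i}}) (LCopy v i) (Sub v e)"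
proof
  assume r: "rch (E2 - {{Sub v e, LCopy v i}}) (LCopy v i) (Sub v e)"
  have "Sub v e \<in> {LCopy v i}"
  proof (rule rtc_closed[OF r])
    fix p q assume p: "p \<in> {LCopy v i}" and pq: "{p, q} \<in> E2 - {{Sub v e, LCopy v i}}"
    then have "{LCopy v i, q} \<in> E2" by simp
    then obtain e' where e': "q = Sub v e'" "e' \<in> E" "v \<in> e'" using nb_LCopy by blast
    then have "e' = e" using leaf_edge v e by blast
    then have "{p, q} = {Sub v e, LCopy v i}" using p e' by (simp add: insert_commute)
    then show "q \<in> {LCopy v i}" using pq by simp
  qed simp
  then show False by simp
qed

lemma sepG:
  assumes g: "g \<in> E2" and ab: "g = {a, b}"
  shows "\<not> rch (E2 - {g}) a b"
proof -
  have key: "\<exists>X Y. g = {X, Y} \<and> \<not> rch (E2 - {g}) X Y"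
    using g
  proof (cases rule: E2_cases)
    case (mid u v e) then show ?thesis using sep_mid by blast
  next
    case (orig u e) then show ?thesis using sep_orig by blast
  next
    case (lc v e i)
    then have "\<not> rch (E2 - {g}) (LCopy v i) (Sub v e)" using sep_lc by blast
    moreover have "g = {LCopy v i, Sub v e}" using lc(6) by (simp add: insert_commute)
    ultimately show ?thesis by blast
  qed
  then obtain X Y where XY: "g = {X, Y}" "\<not> rch (E2 - {g}) X Y" by blast
  then have "(a = X \<and> b = Y) \<or> (a = Y \<and> b = X)" using ab by (simp add: doubleton_eq_iff)
  then show ?thesis
  proof
    assume "a = X \<and> b = Y" then show ?thesis using XY by simp
  next
    assume "a = Y \<and> b = X"
    then show ?thesis using XY rch_sym[of "E2 - {g}" a b] by auto
  qed
qed

lemma noCycG: "\<not> has_cycle V2 E2"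
proof
  assume "has_cycle V2 E2"
  then obtain a b where ab: "{a, b} \<in> E2" "rch (E2 - {{a, b}}) b a" using rch_of_cyc by blast
  have "{a, b} = {b, a}" by (simp add: insert_commute)
  then show False using sepG[OF ab(1), of b a] ab(2) by simp
qed

lemma V2ne: "V2 \<noteq> {}"
proof -
  have "V \<noteq> {}" using card2 by auto
  then obtain u0 where u0: "u0 \<in> V" by blast
  then obtain e0 where e0: "e0 \<in> E" "u0 \<in> e0" using deg_pos by blast
  then have "Sub u0 e0 \<in> V2" by simp
  then show ?thesis by blast
qed

lemma treeG: "is_tree V2 E2"
  unfolding is_tree_def using gG conG noCycG V2ne by blast

end

context s2 begin

lemma E2_sym: "{a, b} \<in> E2 \<Longrightarrow> {b, a} \<in> E2"
  by (simp add: insert_commute)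

lemma dpdpG: "dpdp V2 E2"
proof -
  define P0 where "P0 = {x \<in> V2. \<exists>u e. x = Sub u e}"
  define D0 where "D0 = V2 - P0"
  define M0 where "M0 = {{Sub u e, Sub v e} | u v e. e \<in> E \<and> e = {u, v} \<and> u \<noteq> v}"
  have P0V: "P0 \<subseteq> V2" unfolding P0_def by blast
  have DP: "D0 \<inter> P0 = {}" "D0 \<union> P0 = V2" unfolding D0_def using P0V by blast+
  have SubP0: "Sub u e \<in> P0" if "e \<in> E" "u \<in> e" for u e
    unfolding P0_def using that by simp
  have domD: "dominating V2 E2 D0"
    unfolding dominating_def
  proof (intro conjI ballI)
    show "D0 \<subseteq> V2" unfolding D0_def by blast
  next
    fix x assume x: "x \<in> V2 - D0"
    then have "x \<in> P0" unfolding D0_def by blast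
    then obtain u e where ue: "x = Sub u e" "e \<in> E" "u \<in> e" unfolding P0_def by auto
    show "\<exists>d\<in>D0. {d, x} \<in> E2"
    proof (cases "u \<in> L")
      case True
      have a: "1 \<le> \<alpha> u" using alpha True by blast
      have "LCopy u 1 \<in> V2" using True a by simp
      then have "LCopy u 1 \<in> D0" unfolding D0_def P0_def by simp
      moreover have "{LCopy u 1, x} \<in> E2" using E2_lc[OF True ue(2,3) order_refl a] ue(1) by (simp add: insert_commute)
      ultimately show ?thesis by blast
    next
      case False
      then have uV: "u \<in> V - L" using ue EsubPow by blast
      then have "Orig u \<in> D0" unfolding D0_def P0_def by simp
      moreover have "{Orig u, x} \<in> E2" using E2_orig[OF uV ue(2,3)] ue(1) by simp
      ultimately show ?thesis by blast
    qed
  qed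
  have domP: "dominating V2 E2 P0"
    unfolding dominating_def
  proof (intro conjI ballI)
    show "P0 \<subseteq> V2" by (rule P0V)
  next
    fix x assume x: "x \<in> V2 - P0"
    show "\<exists>d\<in>P0. {d, x} \<in> E2"
    proof (cases x)
      case (Orig u)
      then have uV: "u \<in> V - L" using x by simp
      then obtain e where e: "e \<in> E" "u \<in> e" using deg_pos by blast
      have "{Sub u e, x} \<in> E2" using E2_orig[OF uV e] Orig by (simp add: insert_commute)
      then show ?thesis using SubP0[OF e] by blast
    next
      case (LCopy v i)
      then have v: "v \<in> L" "1 \<le> i" "i \<le> \<alpha> v" using x by simp_all
      then obtain e where e: "e \<in> E" "v \<in> e" using leaf_ex by blast
      have "{Sub v e, x} \<in> E2" using E2_lc[OF v(1) e v(2,3)] LCopy by simp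
      then show ?thesis using SubP0[OF e] by blast
    next
      case (Sub u e)
      then have "x \<in> P0" using x unfolding P0_def by blast
      then show ?thesis using x by blast
    qed
  qed
  have ipm: "induced_perfect_matching E2 P0"
    unfolding induced_perfect_matching_def
  proof (intro exI[of _ M0] conjI ballI)
    show "M0 \<subseteq> E2" unfolding M0_def using E2_mid by blast
  next
    fix m assume "m \<in> M0"
    then obtain u v e where "m = {Sub u e, Sub v e}" "e \<in> E" "e = {u, v}" unfolding M0_def by blast
    then show "m \<subseteq> P0" using SubP0 by simp
  next
    fix x assume "x \<in> P0"
    then obtain u e where ue: "x = Sub u e" "e \<in> E" "u \<in> e" unfolding P0_def by auto
    then obtain v where v: "e = {u, v}" "u \<noteq> v" using edge_other by blast
    have m: "{Sub u e, Sub v e} \<in> M0" unfolding M0_def using ue v by blast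
    show "\<exists>!m. m \<in> M0 \<and> x \<in> m"
    proof (rule ex1I[of _ "{Sub u e, Sub v e}"])
      show "{Sub u e, Sub v e} \<in> M0 \<and> x \<in> {Sub u e, Sub v e}" using m ue by simp
    next
      fix m' assume m': "m' \<in> M0 \<and> x \<in> m'"
      then obtain a b e' where ab: "m' = {Sub a e', Sub b e'}" "e' \<in> E" "e' = {a, b}" "a \<noteq> b"
        unfolding M0_def by blast
      then have "e' = e" "u = a \<or> u = b" using m' ue by auto
      then have "{a, b} = {u, v}" using ab v by simp
      then have "(a = u \<and> b = v) \<or> (a = v \<and> b = u)" by (simp add: doubleton_eq_iff)
      then show "m' = {Sub u e, Sub v e}" using ab \<open>e' = e\<close> by (auto simp: insert_commute)
    qed
  qed
  show ?thesis unfolding dpdp_def paired_dominating_def using DP domD domP ipm by blast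
qed

end

lemma dbl: "{u, a} = {u, b} \<Longrightarrow> a = b"
  by (metis doubleton_eq_iff)

lemma dblE: "e = {u, a} \<Longrightarrow> e = {u, b} \<Longrightarrow> a = b"
proof -
  assume "e = {u, a}" "e = {u, b}"
  then have "{u, a} = {u, b}" by (rule trans[OF sym])
  then show ?thesis by (rule dbl)
qed

lemma dblC: "e = {a, u} \<Longrightarrow> e = {u, b} \<Longrightarrow> a = b"
proof -
  assume h: "e = {a, u}" "e = {u, b}"
  have "{u, a} = {a, u}" by (rule insert_commute)
  then have "{u, a} = e" using h(1) by simp
  then have "{u, a} = {u, b}" using h(2) by (rule trans)
  then show ?thesis by (rule dbl)
qed

context s2 begin

lemma nb_SubE:
  assumes "{Sub u e, x} \<in> E2"
  obtains (sub) v where "x = Sub v e" "e = {u, v}" "u \<noteq> v"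
  | (orig) "x = Orig u" "u \<in> V - L"
  | (lc) i where "x = LCopy u i" "u \<in> L" "1 \<le> i" "i \<le> \<alpha> u"
  using nb_Sub[OF assms] by blast

context
  fixes E' D P M
  assumes E'sub: "E' \<subseteq> E2" and DPi: "D \<inter> P = {}" and DPu: "D \<union> P = V2"
    and domD: "dominating V2 E' D" and domP: "dominating V2 E' P"
    and MS: "M \<subseteq> E'" and MP: "\<forall>m\<in>M. m \<subseteq> P" and MU: "\<forall>x\<in>P. \<exists>!m. m \<in> M \<and> x \<in> m"
begin

lemma Dnb: "x \<in> P \<Longrightarrow> \<exists>d\<in>D. {x, d} \<in> E2"
proof -
  assume x: "x \<in> P"
  then have "x \<in> V2 - D" using DPi DPu by blast
  then obtain d where "d \<in> D" "{d, x} \<in> E'" using domD unfolding dominating_def by blast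
  then show ?thesis using E'sub by (auto simp: insert_commute)
qed

lemma Dnb': "x \<in> P \<Longrightarrow> \<exists>d\<in>D. {d, x} \<in> E'"
proof -
  assume x: "x \<in> P"
  then have "x \<in> V2 - D" using DPi DPu by blast
  then show ?thesis using domD unfolding dominating_def by blast
qed

lemma Pnb': "x \<in> V2 \<Longrightarrow> x \<notin> P \<Longrightarrow> \<exists>p\<in>P. {p, x} \<in> E'"
  using domP unfolding dominating_def by blast

lemma Pnb: "x \<in> V2 \<Longrightarrow> x \<notin> P \<Longrightarrow> \<exists>p\<in>P. {x, p} \<in> E2"
proof -
  assume "x \<in> V2" "x \<notin> P"
  then obtain p where "p \<in> P" "{p, x} \<in> E'" using Pnb' by blast
  then show ?thesis using E'sub by (auto simp: insert_commute)
qed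

lemma PV2: "x \<in> P \<Longrightarrow> x \<in> V2" using DPu by blast
lemma notPD: "x \<in> V2 \<Longrightarrow> x \<notin> P \<Longrightarrow> x \<in> D" using DPu by blast
lemma PnotD: "x \<in> P \<Longrightarrow> x \<notin> D" using DPi by blast

lemma partner: "x \<in> P \<Longrightarrow> \<exists>y. {x, y} \<in> M \<and> y \<in> P"
proof -
  assume x: "x \<in> P"
  then obtain m where m: "m \<in> M" "x \<in> m" using MU by blast
  then have "m \<in> E2" using MS E'sub by blast
  then obtain a b where ab: "m = {a, b}" using E2_sub by blast
  have "m \<subseteq> P" using MP m by blast
  show ?thesis
  proof (cases "x = a")
    case True then show ?thesis using ab m \<open>m \<subseteq> P\<close> by blast
  next
    case False
    then have "x = b" using ab m by blast
    then have "m = {x, a}" using ab by (simp add: insert_commute)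
    then show ?thesis using m \<open>m \<subseteq> P\<close> by blast
  qed
qed

lemma partnerE2: "{x, y} \<in> M \<Longrightarrow> {x, y} \<in> E2" using MS E'sub by blast

lemma Muniq: "{x, y} \<in> M \<Longrightarrow> {x, z} \<in> M \<Longrightarrow> x \<in> P \<Longrightarrow> y = z"
proof -
  assume "{x, y} \<in> M" "{x, z} \<in> M" "x \<in> P"
  then have "{x, y} = {x, z}" using MU by blast
  then show "y = z" by (rule dbl)
qed

lemma LC_notP: "LCopy v i \<notin> P"
proof
  assume lp: "LCopy v i \<in> P"
  then obtain y where y: "{LCopy v i, y} \<in> M" "y \<in> P" using partner by blast
  then obtain e where e: "y = Sub v e" "e \<in> E" "v \<in> e" "v \<in> L" using nb_LCopy partnerE2 by blast
  obtain d where d: "d \<in> D" "{LCopy v i, d} \<in> E2" using Dnb lp by blast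
  then obtain e' where e': "d = Sub v e'" "e' \<in> E" "v \<in> e'" using nb_LCopy by blast
  then have "e' = e" using leaf_edge e by blast
  then have "d = y" using e e' by simp
  then show False using d y DPi by blast
qed

lemma leafSubP: "v \<in> L \<Longrightarrow> e \<in> E \<Longrightarrow> v \<in> e \<Longrightarrow> Sub v e \<in> P"
proof -
  assume v: "v \<in> L" and e: "e \<in> E" "v \<in> e"
  have a: "1 \<le> \<alpha> v" using alpha v by blast
  have "LCopy v 1 \<in> V2" using v a by simp
  then obtain p where p: "p \<in> P" "{LCopy v 1, p} \<in> E2" using Pnb LC_notP by blast
  then obtain e' where e': "p = Sub v e'" "e' \<in> E" "v \<in> e'" using nb_LCopy by blast
  then have "e' = e" using leaf_edge v e by blast
  then show ?thesis using p e' by simp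
qed

lemma claim1:
  assumes ne: "E' \<noteq> E2"
  shows "\<exists>u. Orig u \<in> P"
proof (rule ccontr)
  assume nO: "\<not> (\<exists>u. Orig u \<in> P)"
  have SubP: "Sub u e \<in> P" if e: "e \<in> E" "u \<in> e" for u e
  proof (rule ccontr)
    assume nP: "Sub u e \<notin> P"
    have uL: "u \<notin> L" using leafSubP e nP by blast
    obtain v where v: "e = {u, v}" "u \<noteq> v" using edge_other e by blast
    have "Sub u e \<in> V2" using e by simp
    then obtain p where p: "p \<in> P" "{Sub u e, p} \<in> E2" using Pnb nP by blast
    from p(2) have "Sub v e \<in> P"
    proof (cases rule: nb_SubE)
      case (sub v')
      have "{u, v} = {u, v'}" using trans[OF sym[OF v(1)] sub(2)] .
      then have "v = v'" by (rule dbl)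
      then have "v' = v" by simp
      then show ?thesis using sub p by simp
    next
      case orig then show ?thesis using nO p by blast
    next
      case (lc i) then show ?thesis using uL by blast
    qed
    then obtain y where y: "{Sub v e, y} \<in> M" "y \<in> P" using partner by blast
    from partnerE2[OF y(1)] show False
    proof (cases rule: nb_SubE)
      case (sub w)
      have "u = w" using dblC[OF v(1) sub(2)] .
      then have "w = u" by simp
      then show False using sub y nP by simp
    next
      case orig then show False using nO y by blast
    next
      case (lc i) then show False using LC_notP y by blast
    qed
  qed
  obtain g where g: "g \<in> E2" "g \<notin> E'" using ne E'sub by blast
  from g(1) show False
  proof (cases rule: E2_cases)
    case (mid u v e)
    have "Sub u e \<in> P" using SubP mid by simp
    then obtain y where y: "{Sub u e, y} \<in> M" "y \<in> P" using partner by blast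
    from partnerE2[OF y(1)] show False
    proof (cases rule: nb_SubE)
      case (sub v')
      have "{u, v} = {u, v'}" using trans[OF sym[OF mid(2)] sub(2)] .
      then have "v = v'" by (rule dbl)
      then have "v' = v" by simp
      then have "g \<in> M" using y sub mid by simp
      then show False using g MS by blast
    next
      case orig then show False using nO y by blast
    next
      case (lc i) then show False using LC_notP y by blast
    qed
  next
    case (orig u e)
    have "Sub u e \<in> P" using SubP orig by simp
    then obtain d where d: "d \<in> D" "{d, Sub u e} \<in> E'" using Dnb' by blast
    then have "{Sub u e, d} \<in> E2" using E'sub by (auto simp: insert_commute)
    then show False
    proof (cases rule: nb_SubE)
      case (sub v)
      then have "d \<in> P" using SubP orig by simp
      then show False using d DPi by blast
    next
      case orig': orig
      then have "{d, Sub u e} = g" using orig by simp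
      then show False using d g by simp
    next
      case (lc i) then show False using orig by simp
    qed
  next
    case (lc v e i)
    have "LCopy v i \<in> V2" using lc by simp
    then obtain p where p: "p \<in> P" "{p, LCopy v i} \<in> E'" using Pnb' LC_notP by blast
    then have "{LCopy v i, p} \<in> E2" using E'sub by (auto simp: insert_commute)
    then obtain e' where e': "p = Sub v e'" "e' \<in> E" "v \<in> e'" using nb_LCopy by blast
    then have "e' = e" using leaf_edge lc by blast
    then have "{p, LCopy v i} = g" using lc e' by simp
    then show False using p g by simp
  qed
qed

lemma claim2:
  assumes uP: "Orig u \<in> P"
  shows "u \<in> V - L \<and> (\<exists>w. {u, w} \<in> E \<and> w \<in> V - L \<and> (\<forall>z. {u, z} \<in> E \<longrightarrow> z \<noteq> w \<longrightarrow> Orig z \<in> P))"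
proof -
  have uV: "u \<in> V - L" using PV2[OF uP] by simp
  obtain x where x: "{Orig u, x} \<in> M" "x \<in> P" using partner uP by blast
  then obtain g where g: "x = Sub u g" "g \<in> E" "u \<in> g" using nb_Orig partnerE2 by blast
  then obtain w where w: "g = {u, w}" "u \<noteq> w" using edge_other by blast
  have wL: "w \<notin> L"
  proof
    assume wL: "w \<in> L"
    then have wP: "Sub w g \<in> P" using leafSubP g w by simp
    obtain d where d: "d \<in> D" "{Sub u g, d} \<in> E2" using Dnb x g by blast
    from d(2) show False
    proof (cases rule: nb_SubE)
      case (sub w')
      have "{u, w} = {u, w'}" using trans[OF sym[OF w(1)] sub(2)] .
      then have "w = w'" by (rule dbl)
      then have "w' = w" by simp
      then show False using sub d wP DPi by blast
    next
      case orig then show False using d uP DPi by blast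
    next
      case (lc i) then show False using uV by simp
    qed
  qed
  have wV: "w \<in> V" using edge_V g w by blast
  have main: "Orig z \<in> P" if z: "{u, z} \<in> E" "z \<noteq> w" for z
  proof -
    define h where "h = {u, z}"
    have uz: "u \<noteq> z" using z edge_ne by blast
    have hg: "h \<noteq> g"
    proof
      assume "h = g"
      then have "{u, z} = {u, w}" using w(1) unfolding h_def by (rule trans)
      then have "z = w" by (rule dbl)
      then show False using z(2) by simp
    qed
    have hE: "h \<in> E" "u \<in> h" "z \<in> h" unfolding h_def using z by auto
    have hnP: "Sub u h \<notin> P"
    proof
      assume hP: "Sub u h \<in> P"
      then obtain y where y: "{Sub u h, y} \<in> M" "y \<in> P" using partner by blast
      from partnerE2[OF y(1)] show False
      proof (cases rule: nb_SubE)
        case (sub z')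
        have "z = z'" using dblE[OF h_def sub(2)] .
        then have "z' = z" by simp
        then have zP: "Sub z h \<in> P" using y sub by simp
        obtain d where d: "d \<in> D" "{Sub u h, d} \<in> E2" using Dnb hP by blast
        from d(2) show False
        proof (cases rule: nb_SubE)
          case (sub z'')
          have "z = z''" using dblE[OF h_def sub(2)] .
          then have "z'' = z" by simp
          then show False using sub d zP DPi by blast
        next
          case orig then show False using d uP DPi by blast
        next
          case (lc i) then show False using uV by simp
        qed
      next
        case orig
        then have "{Orig u, Sub u h} \<in> M" using y by (simp add: insert_commute)
        then have "Sub u h = x" using Muniq x uP by blast
        then show False using g hg by simp
      next
        case (lc i) then show False using uV by simp
      qed
    qed
    have zL: "z \<notin> L"
    proof
      assume zL: "z \<in> L"
      then have zP: "Sub z h \<in> P" using leafSubP hE by blast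
      then obtain y where y: "{Sub z h, y} \<in> M" "y \<in> P" using partner by blast
      from partnerE2[OF y(1)] show False
      proof (cases rule: nb_SubE)
        case (sub u')
        have "u = u'" using dblC[OF h_def sub(2)] .
        then have "u' = u" by simp
        then show False using sub y hnP by simp
      next
        case orig then show False using zL by simp
      next
        case (lc i) then show False using y LC_notP by blast
      qed
    qed
    show "Orig z \<in> P"
    proof (cases "Sub z h \<in> P")
      case True
      then obtain y where y: "{Sub z h, y} \<in> M" "y \<in> P" using partner by blast
      from partnerE2[OF y(1)] show ?thesis
      proof (cases rule: nb_SubE)
        case (sub u')
        have "u = u'" using dblC[OF h_def sub(2)] .
        then have "u' = u" by simp
        then show ?thesis using sub y hnP by simp
      next
        case orig then show ?thesis using y by simp
      next
        case (lc i) then show ?thesis using y LC_notP by blast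
      qed
    next
      case False
      have "Sub z h \<in> V2" using hE by simp
      then obtain p where p: "p \<in> P" "{Sub z h, p} \<in> E2" using Pnb False by blast
      from p(2) show ?thesis
      proof (cases rule: nb_SubE)
        case (sub u')
        have "u = u'" using dblC[OF h_def sub(2)] .
        then have "u' = u" by simp
        then show ?thesis using sub p hnP by simp
      next
        case orig then show ?thesis using p by simp
      next
        case (lc i) then show ?thesis using p LC_notP by blast
      qed
    qed
  qed
  show ?thesis using uV g w wL wV main by blast
qed

end
end

context s2 begin

lemma Q_exists:
  fixes R :: "'a set" and f :: "'a \<Rightarrow> 'a"
  assumes RV: "R \<subseteq> V - L" and Rne: "R \<noteq> {}"
    and fR: "\<And>u. u \<in> R \<Longrightarrow> {u, f u} \<in> E \<and> f u \<in> V - L \<and> (\<forall>z. {u, z} \<in> E \<longrightarrow> z \<noteq> f u \<longrightarrow> z \<in> R)"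
  shows "\<exists>VQ EQ. is_tree VQ EQ \<and> VQ \<subseteq> V - (L \<union> supports V E) \<and> EQ \<subseteq> E \<and>
         (\<exists>f. inj_on f VQ \<and> (\<forall>x \<in> VQ. f x \<in> V - L \<and> f x \<notin> VQ \<and> {x, f x} \<in> E)) \<and>
         (\<forall>x \<in> VQ. degree E x = degree EQ x + 1)"
proof -
  define N where "N = (\<lambda>u z. {u, z} \<in> E \<and> z \<noteq> f u)"
  define Cl where "Cl = (\<lambda>u. {y. N\<^sup>*\<^sup>* u y})"
  have finR: "finite R" using RV finV finite_subset by blast
  have ClR: "Cl u \<subseteq> R" if u: "u \<in> R" for u
  proof
    fix y assume "y \<in> Cl u"
    then have "N\<^sup>*\<^sup>* u y" unfolding Cl_def by simp
    then show "y \<in> R"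
    proof (rule rtc_closed)
      show "u \<in> R" by (rule u)
    next
      fix p q assume "p \<in> R" "N p q"
      then show "q \<in> R" using fR unfolding N_def by blast
    qed
  qed
  obtain r where r: "r \<in> R" using Rne by blast
  define u0 where "u0 = arg_min (\<lambda>u. card (Cl u)) (\<lambda>u. u \<in> R)"
  have am: "u0 \<in> R \<and> (\<forall>y. y \<in> R \<longrightarrow> card (Cl u0) \<le> card (Cl y))"
    unfolding u0_def by (rule arg_min_nat_lemma[of "\<lambda>u. u \<in> R" r "\<lambda>u. card (Cl u)", OF r])
  have u0: "u0 \<in> R" using am by simp
  have min: "\<And>u. u \<in> R \<Longrightarrow> card (Cl u0) \<le> card (Cl u)" using am by simp
  define Q where "Q = Cl u0"
  have QR: "Q \<subseteq> R" unfolding Q_def using ClR u0 by blast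
  have finQ: "finite Q" using QR finR finite_subset by blast
  have u0Q: "u0 \<in> Q" unfolding Q_def Cl_def by simp
  have ClQ: "Cl u \<subseteq> Q" if "u \<in> Q" for u
  proof
    fix y assume "y \<in> Cl u"
    then have "N\<^sup>*\<^sup>* u y" unfolding Cl_def by simp
    moreover have "N\<^sup>*\<^sup>* u0 u" using that unfolding Q_def Cl_def by simp
    ultimately show "y \<in> Q" unfolding Q_def Cl_def by simp
  qed
  have ClEq: "Cl u = Q" if "u \<in> Q" for u
  proof (rule card_seteq[OF finQ ClQ[OF that]])
    show "card Q \<le> card (Cl u)" unfolding Q_def using min QR that by blast
  qed
  have closedQ: "z \<in> Q" if "u \<in> Q" "N u z" for u z
  proof -
    have "N\<^sup>*\<^sup>* u0 u" using that(1) unfolding Q_def Cl_def by simp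
    then have "N\<^sup>*\<^sup>* u0 z" using that(2) by (rule rtranclp.rtrancl_into_rtrancl)
    then show ?thesis unfolding Q_def Cl_def by simp
  qed
  have fQ: "{u, f u} \<in> E" "f u \<in> V - L" if "u \<in> Q" for u
    using fR QR that by blast+
  have nbQ: "z \<in> Q" if "u \<in> Q" "{u, z} \<in> E" "z \<noteq> f u" for u z
    using closedQ[OF that(1)] that(2,3) unfolding N_def by blast
  have fnotQ: "f u \<notin> Q" if uQ: "u \<in> Q" for u
  proof
    assume "f u \<in> Q"
    then have "f u \<in> Cl u" using ClEq[OF uQ] by simp
    then have Nuw: "N\<^sup>*\<^sup>* u (f u)" unfolding Cl_def by simp
    have "f u \<in> {y. rch (E - {{u, f u}}) u y}"
    proof (rule rtc_closed[OF Nuw])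
      show "u \<in> {y. rch (E - {{u, f u}}) u y}" by simp
    next
      fix p q assume p: "p \<in> {y. rch (E - {{u, f u}}) u y}" and pq: "N p q"
      show "q \<in> {y. rch (E - {{u, f u}}) u y}"
      proof (cases "{p, q} = {u, f u}")
        case True
        then have "(p = u \<and> q = f u) \<or> (p = f u \<and> q = u)" by (simp add: doubleton_eq_iff)
        then show ?thesis
        proof
          assume "p = u \<and> q = f u"
          then show ?thesis using pq unfolding N_def by simp
        next
          assume "p = f u \<and> q = u"
          then show ?thesis by simp
        qed
      next
        case False
        then have "{p, q} \<in> E - {{u, f u}}" using pq unfolding N_def by simp
        then show ?thesis using p by (simp add: rtranclp.rtrancl_into_rtrancl)
      qed
    qed
    then have "rch (E - {{u, f u}}) u (f u)" by simp
    then show False using sep[OF fQ(1)[OF uQ]] by simp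
  qed
  define EQ where "EQ = {e \<in> E. e \<subseteq> Q}"
  have gQ: "graph Q EQ"
    unfolding graph_def
  proof (intro conjI ballI)
    show "finite Q" by (rule finQ)
  next
    fix e assume "e \<in> EQ"
    then have e: "e \<in> E" "e \<subseteq> Q" unfolding EQ_def by auto
    then obtain a b where "e = {a, b}" "a \<noteq> b" using edgeE by blast
    then show "\<exists>u v. e = {u, v} \<and> u \<in> Q \<and> v \<in> Q \<and> u \<noteq> v" using e(2) by blast
  qed
  have reachQ: "rch EQ u0 a" if "a \<in> Q" for a
  proof -
    have "N\<^sup>*\<^sup>* u0 a" using that unfolding Q_def Cl_def by simp
    then show ?thesis
    proof (induction rule: rtranclp_induct)
      case base then show ?case by simp
    next
      case (step y z)
      have yQ: "y \<in> Q" using step(1) unfolding Q_def Cl_def by simp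
      have zQ: "z \<in> Q" using closedQ[OF yQ step(2)] .
      have "{y, z} \<in> EQ" unfolding EQ_def using step(2) yQ zQ unfolding N_def by simp
      then show ?case using step(3) by (rule rtranclp.rtrancl_into_rtrancl[rotated])
    qed
  qed
  have conQ: "connected_graph Q EQ"
    unfolding connected_graph_def
  proof (intro ballI)
    fix a b assume "a \<in> Q" "b \<in> Q"
    have "rch EQ a u0" using rch_sym[OF reachQ[OF \<open>a \<in> Q\<close>]] .
    moreover have "rch EQ u0 b" using reachQ[OF \<open>b \<in> Q\<close>] .
    ultimately show "rch EQ a b" by (rule rtranclp_trans)
  qed
  have ncQ: "\<not> has_cycle Q EQ"
  proof
    assume "has_cycle Q EQ"
    then obtain xs where xs: "length xs \<ge> 3" "distinct xs" "set xs \<subseteq> Q"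
      "\<forall>i < length xs. {xs ! i, xs ! ((i + 1) mod length xs)} \<in> EQ"
      unfolding has_cycle_def by blast
    have "set xs \<subseteq> V" using xs(3) QR RV by blast
    moreover have "\<forall>i < length xs. {xs ! i, xs ! ((i + 1) mod length xs)} \<in> E"
      using xs(4) unfolding EQ_def by blast
    ultimately have "has_cycle V E" unfolding has_cycle_def using xs(1,2) by blast
    then show False using noc by simp
  qed
  have treeQ: "is_tree Q EQ" unfolding is_tree_def using gQ conQ ncQ u0Q by blast
  have subQ: "Q \<subseteq> V - (L \<union> supports V E)"
  proof
    fix x assume xQ: "x \<in> Q"
    then have xV: "x \<in> V - L" using QR RV by blast
    have "x \<notin> supports V E"
    proof
      assume "x \<in> supports V E"
      then obtain v where v: "v \<in> L" "{v, x} \<in> E" unfolding supports_def by blast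
      then have "{x, v} \<in> E" by (simp add: insert_commute)
      moreover have "v \<noteq> f x" using v(1) fQ(2)[OF xQ] by blast
      ultimately have "v \<in> Q" using nbQ xQ by blast
      then show False using v(1) QR RV by blast
    qed
    then show "x \<in> V - (L \<union> supports V E)" using xV by blast
  qed
  have injQ: "inj_on f Q"
  proof (rule inj_onI)
    fix u u' assume uQ: "u \<in> Q" and u'Q: "u' \<in> Q" and eq: "f u = f u'"
    show "u = u'"
    proof (rule ccontr)
      assume ne: "u \<noteq> u'"
      have sub: "EQ \<subseteq> E - {{u, f u}}" unfolding EQ_def using fnotQ[OF uQ] by blast
      have "rch EQ u u'" using conQ uQ u'Q unfolding connected_graph_def by blast
      then have r: "rch (E - {{u, f u}}) u u'" using sub by (rule rch_mono)
      have "{u', f u} \<in> E" using fQ(1)[OF u'Q] eq by simp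
      moreover have "{u', f u} \<noteq> {u, f u}"
      proof
        assume "{u', f u} = {u, f u}"
        then have "{f u, u'} = {f u, u}" by (simp add: insert_commute)
        then have "u' = u" by (rule dbl)
        then show False using ne by simp
      qed
      ultimately have "{u', f u} \<in> E - {{u, f u}}" by simp
      with r have "rch (E - {{u, f u}}) u (f u)" by (rule rtranclp.rtrancl_into_rtrancl)
      then show False using sep[OF fQ(1)[OF uQ]] by simp
    qed
  qed
  have degQ: "degree E x = degree EQ x + 1" if xQ: "x \<in> Q" for x
  proof -
    have "{e \<in> E. x \<in> e} = insert {x, f x} {e \<in> EQ. x \<in> e}"
    proof
      show "{e \<in> E. x \<in> e} \<subseteq> insert {x, f x} {e \<in> EQ. x \<in> e}"
      proof
        fix e assume e: "e \<in> {e \<in> E. x \<in> e}"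
        then have "e \<in> E" "x \<in> e" by simp_all
        then obtain z where z: "e = {x, z}" using edge_other by blast
        show "e \<in> insert {x, f x} {e \<in> EQ. x \<in> e}"
        proof (cases "z = f x")
          case True then show ?thesis using z by simp
        next
          case False
          have "{x, z} \<in> E" using \<open>e \<in> E\<close> z by simp
          then have "z \<in> Q" using nbQ[OF xQ _ False] by simp
          then have "e \<in> EQ" unfolding EQ_def using e z xQ by blast
          then show ?thesis using z by simp
        qed
      qed
    next
      show "insert {x, f x} {e \<in> EQ. x \<in> e} \<subseteq> {e \<in> E. x \<in> e}"
        using fQ(1)[OF xQ] unfolding EQ_def by blast
    qed
    moreover have "{x, f x} \<notin> {e \<in> EQ. x \<in> e}" unfolding EQ_def using fnotQ[OF xQ] by blast
    moreover have "finite {e \<in> EQ. x \<in> e}" using finE unfolding EQ_def by simp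
    ultimately show ?thesis unfolding degree_def by simp
  qed
  have fall: "\<forall>x \<in> Q. f x \<in> V - L \<and> f x \<notin> Q \<and> {x, f x} \<in> E" using fQ fnotQ by blast
  have EQE: "EQ \<subseteq> E" unfolding EQ_def by blast
  show ?thesis
    apply (rule exI[of _ Q], rule exI[of _ EQ])
    apply (intro conjI)
        apply (rule treeQ)
       apply (rule subQ)
      apply (rule EQE)
     apply (rule exI[of _ f], intro conjI, rule injQ, rule fall)
    using degQ by blast
qed

end

context s2 begin

lemma Q_nonmin:
  assumes tQ: "is_tree Q EQ" and sQ: "Q \<subseteq> V - (L \<union> supports V E)" and EQE: "EQ \<subseteq> E"
    and inj: "inj_on f Q" and fQ: "\<forall>x\<in>Q. f x \<in> V - L \<and> f x \<notin> Q \<and> {x, f x} \<in> E"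
    and deg: "\<forall>x\<in>Q. degree E x = degree EQ x + 1"
  shows "\<exists>E'. E' \<subset> E2 \<and> dpdp V2 E'"
proof -
  have gQ: "graph Q EQ" using tQ unfolding is_tree_def by blast
  have QV: "Q \<subseteq> V - L" using sQ by blast
  have fx: "f x \<in> V - L" "f x \<notin> Q" "{x, f x} \<in> E" if "x \<in> Q" for x
    using fQ that by blast+
  have nbQ: "z = f x \<or> z \<in> Q" if xQ: "x \<in> Q" and xz: "{x, z} \<in> E" for x z
  proof -
    let ?A = "{e \<in> E. x \<in> e}" and ?B = "{e \<in> EQ. x \<in> e}"
    have finA: "finite ?A" using finE by simp
    have BA: "insert {x, f x} ?B \<subseteq> ?A" using EQE fx(3)[OF xQ] by blast
    have nB: "{x, f x} \<notin> ?B"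
    proof
      assume "{x, f x} \<in> ?B"
      then have "{x, f x} \<subseteq> Q" using graph_sub[OF gQ] by blast
      then show False using fx(2)[OF xQ] by simp
    qed
    have finB: "finite ?B" using finite_subset[OF _ finA] BA by blast
    have "card (insert {x, f x} ?B) = card ?B + 1" using nB finB by simp
    also have "\<dots> = card ?A" using deg xQ unfolding degree_def by simp
    finally have "insert {x, f x} ?B = ?A" using card_seteq[OF finA BA] by simp
    then have "{x, z} \<in> insert {x, f x} ?B" using xz by simp
    then have "{x, z} = {x, f x} \<or> {x, z} \<in> EQ" by blast
    then show ?thesis
    proof
      assume "{x, z} = {x, f x}"
      then have "z = f x" by (rule dbl)
      then show ?thesis by simp
    next
      assume "{x, z} \<in> EQ"
      then have "{x, z} \<subseteq> Q" using graph_sub[OF gQ] by blast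
      then show ?thesis by simp
    qed
  qed
  have exQ: "\<exists>z\<in>Q. {x, z} \<in> E" if xQ: "x \<in> Q" for x
  proof -
    have xV: "x \<in> V" "x \<notin> L" using QV xQ by blast+
    have "degree EQ x \<noteq> 0"
    proof
      assume "degree EQ x = 0"
      then have "degree E x = 1" using deg xQ by simp
      then have "x \<in> L" using xV unfolding leaves_def by simp
      then show False using xV by simp
    qed
    then have "{e \<in> EQ. x \<in> e} \<noteq> {}" unfolding degree_def by (metis card.empty)
    then obtain e where e: "e \<in> EQ" "x \<in> e" by blast
    then have "e \<in> E" using EQE by blast
    then obtain z where z: "e = {x, z}" using edge_other e(2) by blast
    have "z \<in> Q" using graph_sub[OF gQ e(1)] z by simp
    then show ?thesis using z \<open>e \<in> E\<close> by blast
  qed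
  have "Q \<noteq> {}" using tQ unfolding is_tree_def by blast
  then obtain x0 where x0: "x0 \<in> Q" by blast
  then obtain z0 where z0: "z0 \<in> Q" "{x0, z0} \<in> E" using exQ by blast
  define h0 where "h0 = {x0, z0}"
  have h0E: "h0 \<in> E" using z0 h0_def by simp
  have xz0: "x0 \<noteq> z0" using edge_ne z0 by blast
  define rem where "rem = {Sub x0 h0, Sub z0 h0}"
  have remE2: "rem \<in> E2" unfolding rem_def using E2_mid[OF h0E h0_def xz0] .
  have notrem: "g \<noteq> rem" if "c \<in> g" "c \<noteq> Sub x0 h0" "c \<noteq> Sub z0 h0" for g c
    using that unfolding rem_def by blast
  have subnotrem: "Sub a e \<noteq> Sub x0 h0" "Sub a e \<noteq> Sub z0 h0" if "a \<notin> Q" for a e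
    using that x0 z0 by auto
  define P where "P = Orig ` Q \<union> {Sub a e | a e. e \<in> E \<and> a \<in> e \<and> (\<forall>b\<in>e. b \<noteq> a \<longrightarrow> b \<notin> Q)}"
  define D where "D = V2 - P"
  define M where "M = {{Orig u, Sub u {u, f u}} | u. u \<in> Q} \<union>
     {{Sub a e, Sub b e} | a b e. e \<in> E \<and> e = {a, b} \<and> a \<noteq> b \<and> a \<notin> Q \<and> b \<notin> Q}"
  define E' where "E' = E2 - {rem}"
  have Psub: "Sub a e \<in> P \<longleftrightarrow> b \<notin> Q" if e: "e \<in> E" "e = {a, b}" "a \<noteq> b" for a e b
  proof -
    have "Sub a e \<in> P \<longleftrightarrow> (\<forall>c\<in>e. c \<noteq> a \<longrightarrow> c \<notin> Q)" unfolding P_def using e by auto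
    also have "\<dots> \<longleftrightarrow> b \<notin> Q" using e by auto
    finally show ?thesis .
  qed
  have POrig: "Orig u \<in> P \<longleftrightarrow> u \<in> Q" for u unfolding P_def by auto
  have PLC: "LCopy v i \<notin> P" for v i unfolding P_def by auto
  have PV2: "P \<subseteq> V2"
  proof
    fix x assume "x \<in> P"
    then show "x \<in> V2" unfolding P_def using QV by auto
  qed
  have Pcases: "(\<exists>u. x = Orig u \<and> u \<in> Q) \<or> (\<exists>a e. x = Sub a e \<and> e \<in> E \<and> a \<in> e)" if "x \<in> P" for x
    using that unfolding P_def by blast
  have inD: "x \<in> D" if "x \<in> V2" "x \<notin> P" for x using that unfolding D_def by blast
  have sub2: "E' \<subset> E2" unfolding E'_def using remE2 by blast
  have domD: "dominating V2 E' D"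
    unfolding dominating_def
  proof (intro conjI ballI)
    show "D \<subseteq> V2" unfolding D_def by blast
  next
    fix x assume "x \<in> V2 - D"
    then have xP: "x \<in> P" unfolding D_def by blast
    show "\<exists>d\<in>D. {d, x} \<in> E'"
    proof (cases "\<exists>u. x = Orig u \<and> u \<in> Q")
      case True
      then obtain u where u: "x = Orig u" "u \<in> Q" by blast
      then obtain z where z: "z \<in> Q" "{u, z} \<in> E" using exQ by blast
      have uz: "u \<noteq> z" using edge_ne z by blast
      have "Sub u {u, z} \<notin> P" using Psub[OF z(2) refl uz] z by simp
      moreover have "Sub u {u, z} \<in> V2" using z by simp
      ultimately have dD: "Sub u {u, z} \<in> D" using inD by blast
      have uV: "u \<in> V - L" using QV u by blast
      have "{Orig u, Sub u {u, z}} \<in> E2" using E2_orig[OF uV z(2)] by simp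
      then have "{Sub u {u, z}, x} \<in> E2" using u by (simp add: insert_commute)
      moreover have "{Sub u {u, z}, x} \<noteq> rem" using notrem[of x] u by simp
      ultimately show ?thesis using dD unfolding E'_def by blast
    next
      case False
      then obtain a e where ae: "x = Sub a e" "e \<in> E" "a \<in> e" using Pcases xP by blast
      then obtain b where b: "e = {a, b}" "a \<noteq> b" using edge_other by blast
      have bQ: "b \<notin> Q" using Psub[OF ae(2) b] xP ae by simp
      show ?thesis
      proof (cases "a \<in> Q")
        case True
        have eba: "e = {b, a}" using b by (simp add: insert_commute)
        have "Sub b e \<notin> P" using Psub[OF ae(2) eba] b True by simp
        moreover have "Sub b e \<in> V2" using ae b by simp
        ultimately have dD: "Sub b e \<in> D" using inD by blast
        have "{Sub b e, Sub a e} \<in> E2" using E2_mid[OF ae(2) eba] b by simp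
        moreover have "{Sub b e, Sub a e} \<noteq> rem" using notrem[of "Sub b e"] subnotrem[OF bQ] by simp
        ultimately show ?thesis using dD ae unfolding E'_def by blast
      next
        case aQ: False
        show ?thesis
        proof (cases "a \<in> L")
          case True
          have a1: "1 \<le> \<alpha> a" using alpha True by blast
          have dD: "LCopy a 1 \<in> D" using inD[of "LCopy a 1"] PLC True a1 by simp
          have "{Sub a e, LCopy a 1} \<in> E2" using E2_lc[OF True ae(2,3) order_refl a1] .
          then have "{LCopy a 1, x} \<in> E2" using ae by (simp add: insert_commute)
          moreover have "{LCopy a 1, x} \<noteq> rem" using notrem[of "LCopy a 1"] by simp
          ultimately show ?thesis using dD unfolding E'_def by blast
        next
          case False
          have aV: "a \<in> V - L" using False ae EsubPow by blast
          have dD: "Orig a \<in> D" using inD[of "Orig a"] POrig aQ aV by simp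
          have "{Orig a, x} \<in> E2" using E2_orig[OF aV ae(2,3)] ae by simp
          moreover have "{Orig a, x} \<noteq> rem" using notrem[of "Orig a"] by simp
          ultimately show ?thesis using dD unfolding E'_def by blast
        qed
      qed
    qed
  qed
  have domP: "dominating V2 E' P"
    unfolding dominating_def
  proof (intro conjI ballI)
    show "P \<subseteq> V2" by (rule PV2)
  next
    fix x assume x: "x \<in> V2 - P"
    show "\<exists>p\<in>P. {p, x} \<in> E'"
    proof (cases x)
      case (Orig u)
      then have uV: "u \<in> V - L" "u \<notin> Q" using x POrig by auto
      obtain e1 e2 where e12: "e1 \<in> E" "e2 \<in> E" "u \<in> e1" "u \<in> e2" "e1 \<noteq> e2"
        using nonleaf_two[OF uV(1)] by blast
      obtain b1 where b1: "e1 = {u, b1}" "u \<noteq> b1" using edge_other e12 by blast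
      obtain b2 where b2: "e2 = {u, b2}" "u \<noteq> b2" using edge_other e12 by blast
      have "\<exists>e b. e \<in> E \<and> e = {u, b} \<and> u \<noteq> b \<and> b \<notin> Q"
      proof (rule ccontr)
        assume "\<not> ?thesis"
        then have bQ: "b1 \<in> Q" "b2 \<in> Q" using e12 b1 b2 by blast+
        have "{b1, u} \<in> E" "{b2, u} \<in> E" using e12 b1 b2 by (simp_all add: insert_commute)
        then have "u = f b1" "u = f b2" using nbQ bQ uV(2) by blast+
        then have "b1 = b2" using inj bQ unfolding inj_on_def by metis
        then show False using e12 b1 b2 by simp
      qed
      then obtain e b where eb: "e \<in> E" "e = {u, b}" "u \<noteq> b" "b \<notin> Q" by blast
      have pP: "Sub u e \<in> P" using Psub[OF eb(1-3)] eb(4) by simp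
      have "{Sub u e, x} \<in> E2" using E2_orig[OF uV(1) eb(1)] eb(2) Orig by (simp add: insert_commute)
      moreover have "{Sub u e, x} \<noteq> rem" using notrem[of x] Orig by simp
      ultimately show ?thesis using pP unfolding E'_def by blast
    next
      case (LCopy v i)
      then have v: "v \<in> L" "1 \<le> i" "i \<le> \<alpha> v" using x by simp_all
      obtain e where e: "e \<in> E" "v \<in> e" using leaf_ex v by blast
      obtain b where b: "e = {v, b}" "v \<noteq> b" using edge_other e by blast
      have bQ: "b \<notin> Q"
      proof
        assume bQ: "b \<in> Q"
        have "{b, v} \<in> E" using e b by (simp add: insert_commute)
        then have "v = f b \<or> v \<in> Q" using nbQ bQ by blast
        then show False using fx(1)[OF bQ] QV v(1) by blast
      qed
      have pP: "Sub v e \<in> P" using Psub[OF e(1) b] bQ by simp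
      have "{Sub v e, x} \<in> E2" using E2_lc[OF v(1) e v(2,3)] LCopy by simp
      moreover have "{Sub v e, x} \<noteq> rem" using notrem[of x] LCopy by simp
      ultimately show ?thesis using pP unfolding E'_def by blast
    next
      case (Sub a e)
      then have ae: "e \<in> E" "a \<in> e" "Sub a e \<notin> P" using x by simp_all
      obtain b where b: "e = {a, b}" "a \<noteq> b" using edge_other ae by blast
      have bQ: "b \<in> Q" using Psub[OF ae(1) b] ae(3) by simp
      show ?thesis
      proof (cases "a \<in> Q")
        case True
        have pP: "Orig a \<in> P" using POrig True by simp
        have aV: "a \<in> V - L" using QV True by blast
        have "{Orig a, x} \<in> E2" using E2_orig[OF aV ae(1,2)] Sub by simp
        moreover have "{Orig a, x} \<noteq> rem" using notrem[of "Orig a"] by simp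
        ultimately show ?thesis using pP unfolding E'_def by blast
      next
        case False
        have eba: "e = {b, a}" using b by (simp add: insert_commute)
        have pP: "Sub b e \<in> P" using Psub[OF ae(1) eba] b False by simp
        have "{Sub b e, x} \<in> E2" using E2_mid[OF ae(1) eba] b Sub by simp
        moreover have "{Sub b e, x} \<noteq> rem" using notrem[of x] subnotrem[OF False] Sub by simp
        ultimately show ?thesis using pP unfolding E'_def by blast
      qed
    qed
  qed
  have ipm: "induced_perfect_matching E' P"
    unfolding induced_perfect_matching_def
  proof (intro exI[of _ M] conjI ballI)
    show "M \<subseteq> E'"
    proof
      fix m assume "m \<in> M"
      then consider (a) u where "m = {Orig u, Sub u {u, f u}}" "u \<in> Q"
        | (b) a b e where "m = {Sub a e, Sub b e}" "e \<in> E" "e = {a, b}" "a \<noteq> b" "a \<notin> Q" "b \<notin> Q"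
        unfolding M_def by blast
      then show "m \<in> E'"
      proof cases
        case (a u)
        have uV: "u \<in> V - L" using QV a by blast
        have "m \<in> E2" using E2_orig[OF uV fx(3)[OF a(2)]] a by simp
        moreover have "m \<noteq> rem" using notrem[of "Orig u"] a by simp
        ultimately show ?thesis unfolding E'_def by blast
      next
        case (b a b e)
        have "m \<in> E2" using E2_mid[OF b(2,3,4)] b(1) by simp
        moreover have "m \<noteq> rem" using notrem[of "Sub a e"] subnotrem[OF b(5)] b(1) by simp
        ultimately show ?thesis unfolding E'_def by blast
      qed
    qed
  next
    fix m assume "m \<in> M"
    then consider (a) u where "m = {Orig u, Sub u {u, f u}}" "u \<in> Q"
      | (b) a b e where "m = {Sub a e, Sub b e}" "e \<in> E" "e = {a, b}" "a \<noteq> b" "a \<notin> Q" "b \<notin> Q"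
      unfolding M_def by blast
    then show "m \<subseteq> P"
    proof cases
      case (a u)
      have "u \<noteq> f u"
      proof
        assume "u = f u"
        then have "f u \<in> Q" using a(2) by simp
        then show False using fx(2)[OF a(2)] by simp
      qed
      then have "Sub u {u, f u} \<in> P" using Psub[OF fx(3)[OF a(2)] refl] fx(2)[OF a(2)] by simp
      then show ?thesis using a POrig by simp
    next
      case (b a b e)
      have eba: "e = {b, a}" using b by (simp add: insert_commute)
      have "Sub a e \<in> P" using Psub[OF b(2,3,4)] b(6) by simp
      moreover have "Sub b e \<in> P" using Psub[OF b(2) eba] b(4,5) by simp
      ultimately show ?thesis using b(1) by simp
    qed
  next
    fix x assume xP: "x \<in> P"
    have Mfirst: "\<And>m. m \<in> M \<Longrightarrow> (\<exists>u. m = {Orig u, Sub u {u, f u}} \<and> u \<in> Q) \<or>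
        (\<exists>a b e. m = {Sub a e, Sub b e} \<and> e \<in> E \<and> e = {a, b} \<and> a \<noteq> b \<and> a \<notin> Q \<and> b \<notin> Q)"
      unfolding M_def by blast
    show "\<exists>!m. m \<in> M \<and> x \<in> m"
    proof (cases "\<exists>u. x = Orig u \<and> u \<in> Q")
      case True
      then obtain u where u: "x = Orig u" "u \<in> Q" by blast
      show ?thesis
      proof (rule ex1I[of _ "{Orig u, Sub u {u, f u}}"])
        show "{Orig u, Sub u {u, f u}} \<in> M \<and> x \<in> {Orig u, Sub u {u, f u}}"
          unfolding M_def using u by blast
      next
        fix m assume m: "m \<in> M \<and> x \<in> m"
        then show "m = {Orig u, Sub u {u, f u}}" using Mfirst[of m] u by auto
      qed
    next
      case False
      then obtain a e where ae: "x = Sub a e" "e \<in> E" "a \<in> e" using Pcases xP by blast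
      then obtain b where b: "e = {a, b}" "a \<noteq> b" using edge_other by blast
      have bQ: "b \<notin> Q" using Psub[OF ae(2) b] xP ae by simp
      show ?thesis
      proof (cases "a \<in> Q")
        case aQ: True
        have bf: "b = f a" using nbQ[OF aQ] ae b bQ by blast
        then have ef: "{a, f a} = e" using b by simp
        show ?thesis
        proof (rule ex1I[of _ "{Orig a, Sub a e}"])
          show "{Orig a, Sub a e} \<in> M \<and> x \<in> {Orig a, Sub a e}"
            unfolding M_def using aQ ae ef by force
        next
          fix m assume m: "m \<in> M \<and> x \<in> m"
          have disj: "(\<exists>u. m = {Orig u, Sub u {u, f u}} \<and> u \<in> Q) \<or>
            (\<exists>a b e. m = {Sub a e, Sub b e} \<and> e \<in> E \<and> e = {a, b} \<and> a \<noteq> b \<and> a \<notin> Q \<and> b \<notin> Q)"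
            using Mfirst m by blast
          from disj show "m = {Orig a, Sub a e}"
          proof (elim disjE exE conjE)
            fix u assume "m = {Orig u, Sub u {u, f u}}" "u \<in> Q"
            then have "Sub a e = Sub u {u, f u}" using m ae by auto
            then show ?thesis using \<open>m = _\<close> by simp
          next
            fix a' b' e' assume "m = {Sub a' e', Sub b' e'}" "e' \<in> E" "e' = {a', b'}" "a' \<noteq> b'" "a' \<notin> Q" "b' \<notin> Q"
            then show ?thesis using m ae aQ by auto
          qed
        qed
      next
        case aQ: False
        show ?thesis
        proof (rule ex1I[of _ "{Sub a e, Sub b e}"])
          show "{Sub a e, Sub b e} \<in> M \<and> x \<in> {Sub a e, Sub b e}"
            unfolding M_def using aQ bQ ae b by blast
        next
          fix m assume m: "m \<in> M \<and> x \<in> m"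
          have disj: "(\<exists>u. m = {Orig u, Sub u {u, f u}} \<and> u \<in> Q) \<or>
            (\<exists>a b e. m = {Sub a e, Sub b e} \<and> e \<in> E \<and> e = {a, b} \<and> a \<noteq> b \<and> a \<notin> Q \<and> b \<notin> Q)"
            using Mfirst m by blast
          from disj show "m = {Sub a e, Sub b e}"
          proof (elim disjE exE conjE)
            fix u assume "m = {Orig u, Sub u {u, f u}}" "u \<in> Q"
            then show ?thesis using m ae aQ by auto
          next
            fix a' b' e' assume m': "m = {Sub a' e', Sub b' e'}" "e' \<in> E" "e' = {a', b'}" "a' \<noteq> b'" "a' \<notin> Q" "b' \<notin> Q"
            have ee: "e' = e" "a = a' \<or> a = b'" using m m' ae by auto
            then have "{a', b'} = {a, b}" using m'(3) b(1) by simp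
            then have "(a' = a \<and> b' = b) \<or> (a' = b \<and> b' = a)" by (simp add: doubleton_eq_iff)
            then show ?thesis using m'(1) ee(1) by (auto simp: insert_commute)
          qed
        qed
      qed
    qed
  qed
  have "dpdp V2 E'"
    unfolding dpdp_def paired_dominating_def
    apply (rule exI[of _ D], rule exI[of _ P])
    using domD domP ipm PV2 unfolding D_def by blast
  then show ?thesis using sub2 by blast
qed

end

context s2 begin

lemma main:
  "dpdp_tree V2 E2 \<and>
    (\<not> minimal_dpdp_tree V2 E2 \<longleftrightarrow>
      (\<exists>VQ EQ. is_tree VQ EQ \<and> VQ \<subseteq> V - (leaves V E \<union> supports V E) \<and> EQ \<subseteq> E \<and>
         (\<exists>f. inj_on f VQ \<and> (\<forall>x \<in> VQ. f x \<in> V - leaves V E \<and> f x \<notin> VQ \<and> {x, f x} \<in> E)) \<and>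
         (\<forall>x \<in> VQ. degree E x = degree EQ x + 1)))"
proof -
  have A: "dpdp_tree V2 E2" unfolding dpdp_tree_def using treeG dpdpG by blast
  have B: "\<not> minimal_dpdp_tree V2 E2 \<longleftrightarrow> (\<exists>E'. E' \<subset> E2 \<and> dpdp V2 E')"
    unfolding minimal_dpdp_tree_def minimal_dpdp_def using treeG dpdpG by simp
  have C: "\<exists>VQ EQ. is_tree VQ EQ \<and> VQ \<subseteq> V - (leaves V E \<union> supports V E) \<and> EQ \<subseteq> E \<and>
         (\<exists>f. inj_on f VQ \<and> (\<forall>x \<in> VQ. f x \<in> V - leaves V E \<and> f x \<notin> VQ \<and> {x, f x} \<in> E)) \<and>
         (\<forall>x \<in> VQ. degree E x = degree EQ x + 1)"
    if "\<exists>E'. E' \<subset> E2 \<and> dpdp V2 E'"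
  proof -
    from that obtain E' where E': "E' \<subset> E2" "dpdp V2 E'" by (elim exE conjE)
    then obtain D P where DP: "D \<inter> P = {}" "D \<union> P = V2" "dominating V2 E' D" "paired_dominating V2 E' P"
      unfolding dpdp_def by blast
    then have domP: "dominating V2 E' P" and "induced_perfect_matching E' P"
      unfolding paired_dominating_def by blast+
    then obtain M where M: "M \<subseteq> E'" "\<forall>e \<in> M. e \<subseteq> P" "\<forall>v \<in> P. \<exists>!e. e \<in> M \<and> v \<in> e"
      unfolding induced_perfect_matching_def by blast
    have E'sub: "E' \<subseteq> E2" and ne: "E' \<noteq> E2" using E'(1) by blast+
    note c1 = claim1[OF E'sub DP(1,2,3) domP M(1,2,3) ne]
    note c2 = claim2[OF E'sub DP(1,2,3) domP M(1,2,3)]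
    define R where "R = {u. Orig u \<in> P}"
    define f where "f = (\<lambda>u. SOME w. {u, w} \<in> E \<and> w \<in> V - L \<and> (\<forall>z. {u, z} \<in> E \<longrightarrow> z \<noteq> w \<longrightarrow> Orig z \<in> P))"
    have RV: "R \<subseteq> V - L" unfolding R_def using c2 by blast
    have Rne: "R \<noteq> {}" unfolding R_def using c1 by blast
    have fR: "{u, f u} \<in> E \<and> f u \<in> V - L \<and> (\<forall>z. {u, z} \<in> E \<longrightarrow> z \<noteq> f u \<longrightarrow> z \<in> R)" if "u \<in> R" for u
    proof -
      have ex: "\<exists>w. {u, w} \<in> E \<and> w \<in> V - L \<and> (\<forall>z. {u, z} \<in> E \<longrightarrow> z \<noteq> w \<longrightarrow> Orig z \<in> P)"
        using c2 that unfolding R_def by blast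
      show ?thesis unfolding f_def R_def using someI_ex[OF ex] by simp
    qed
    show ?thesis by (rule Q_exists[OF RV Rne fR])
  qed
  have D: "\<exists>E'. E' \<subset> E2 \<and> dpdp V2 E'"
    if "\<exists>VQ EQ. is_tree VQ EQ \<and> VQ \<subseteq> V - (leaves V E \<union> supports V E) \<and> EQ \<subseteq> E \<and>
         (\<exists>f. inj_on f VQ \<and> (\<forall>x \<in> VQ. f x \<in> V - leaves V E \<and> f x \<notin> VQ \<and> {x, f x} \<in> E)) \<and>
         (\<forall>x \<in> VQ. degree E x = degree EQ x + 1)"
  proof -
    from that show ?thesis
      by (elim exE conjE) (rule Q_nonmin; assumption)
  qed
  show ?thesis
    apply (intro conjI iffI)
      apply (rule A)
     apply (rule C)
     apply (rule B[THEN iffD1])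
     apply assumption
    apply (rule B[THEN iffD2])
    apply (rule D)
    apply assumption
    done
qed

end

theorem corollary7p4:
  fixes V :: "'a set" and E :: "'a set set" and \<alpha> :: "'a \<Rightarrow> nat"
  assumes "is_tree V E" and "card V \<ge> 2"
    and "\<forall>v \<in> leaves V E. \<alpha> v \<ge> 1"
  shows "dpdp_tree (S2V V E \<alpha>) (S2E V E \<alpha>) \<and>
    (\<not> minimal_dpdp_tree (S2V V E \<alpha>) (S2E V E \<alpha>) \<longleftrightarrow>
      (\<exists>VQ EQ. is_tree VQ EQ \<and> VQ \<subseteq> V - (leaves V E \<union> supports V E) \<and> EQ \<subseteq> E \<and>
         (\<exists>f. inj_on f VQ \<and> (\<forall>x \<in> VQ. f x \<in> V - leaves V E \<and> f x \<notin> VQ \<and> {x, f x} \<in> E)) \<and>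
         (\<forall>x \<in> VQ. degree E x = degree EQ x + 1)))"
proof -
  interpret s2 V E \<alpha> using assms by unfold_locales
  show ?thesis by (rule main)
qed

end
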